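(* Let $(R,\mathfrak m,k)$ be an Artinian local ring of prime characteristic $p$ with $\mathfrak m^p=0$, and let $M$ be an $R$-module of finite length and infinite projective dimension. Then for each $r\ge 1$, $$\lim_{s\to\infty}\frac{\ell_R(\operatorname{Tor}^R_s(M,{}^{\phi^r}\!R))}{\ell_R(\operatorname{Tor}^R_s(M,k))}=\ell_R(R)<\infty,$$ where $\ell_R$ denotes length.
   Context: $\phi:R\to R$ denotes the Frobenius homomorphism $\phi(a)=a^p$. For $r\ge 1$, ${}^{\phi^r}\!R$ denotes the ring $R$ regarded as an $R$-module via $\phi^r$, i.e. $a\cdot b=a^{p^r}b$ for $a\in R$, $b\in {}^{\phi^r}\!R$. *)

theory Defs
  imports Complex_Main "HOL-Library.Extended_Nat" "HOL-Computational_Algebra.Primes" "HOL-Library.Function_Algebras"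
begin

definition is_submod :: "'v \<Rightarrow> ('v \<Rightarrow> 'v \<Rightarrow> 'v) \<Rightarrow> ('a \<Rightarrow> 'v \<Rightarrow> 'v) \<Rightarrow> 'v set \<Rightarrow> bool" where
  "is_submod z add sc S \<longleftrightarrow> z \<in> S \<and> (\<forall>x\<in>S. \<forall>y\<in>S. add x y \<in> S) \<and> (\<forall>c. \<forall>x\<in>S. sc c x \<in> S)"

text \<open>Length of the subquotient B/A: supremum of the lengths n of strict chains
  A = C 0 < C 1 < ... < C n = B of submodules (infinite if unbounded).\<close>
definition len :: "'v \<Rightarrow> ('v \<Rightarrow> 'v \<Rightarrow> 'v) \<Rightarrow> ('a \<Rightarrow> 'v \<Rightarrow> 'v) \<Rightarrow> 'v set \<Rightarrow> 'v set \<Rightarrow> enat" where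
  "len z add sc A B = Sup {enat n | n. \<exists>C. C 0 = A \<and> C n = B \<and>
      (\<forall>i\<le>n. is_submod z add sc (C i)) \<and> (\<forall>i<n. C i \<subset> C (Suc i))}"

definition mod_length :: "('a \<Rightarrow> 'v::ab_group_add \<Rightarrow> 'v) \<Rightarrow> enat" where
  "mod_length sc = len 0 (+) sc {0} UNIV"

definition is_ideal :: "'a::comm_ring_1 set \<Rightarrow> bool" where
  "is_ideal I \<longleftrightarrow> is_submod 0 (+) (*) I"

definition maxideal :: "'a::comm_ring_1 set" where
  "maxideal = {x. \<not> x dvd 1}"

text \<open>Local ring: nontrivial, and the non-units form an ideal (the unique maximal ideal).\<close>
definition local_ring :: "'a::comm_ring_1 itself \<Rightarrow> bool" where
  "local_ring _ \<longleftrightarrow> (0::'a) \<noteq> 1 \<and> is_ideal (maxideal :: 'a set)"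

definition artinian :: "'a::comm_ring_1 itself \<Rightarrow> bool" where
  "artinian _ \<longleftrightarrow> \<not> (\<exists>I :: nat \<Rightarrow> 'a set. \<forall>n. is_ideal (I n) \<and> I (Suc n) \<subset> I n)"

definition vecs :: "nat \<Rightarrow> (nat \<Rightarrow> 'v::zero) set" where
  "vecs b = {x. \<forall>j\<ge>b. x j = 0}"

definition mv :: "('a \<Rightarrow> 'v \<Rightarrow> 'v) \<Rightarrow> (nat \<Rightarrow> nat \<Rightarrow> 'a) \<Rightarrow> nat \<Rightarrow> nat \<Rightarrow> (nat \<Rightarrow> 'v::comm_monoid_add) \<Rightarrow> nat \<Rightarrow> 'v" where
  "mv act D m n x = (\<lambda>j. if j < m then (\<Sum>k<n. act (D j k) (x k)) else 0)"

definition lin :: "('a \<Rightarrow> 'm \<Rightarrow> 'm) \<Rightarrow> (nat \<Rightarrow> 'm) \<Rightarrow> nat \<Rightarrow> (nat \<Rightarrow> 'a) \<Rightarrow> 'm::comm_monoid_add" where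
  "lin smul g n x = (\<Sum>k<n. smul (x k) (g k))"

text \<open>Projective resolution by finitely generated projective modules
  P i = image of the idempotent matrix E i on R^(b i) (i.e. direct summands of finite free modules),
  differentials P i \<rightarrow> P (i-1) given by the matrices D i, augmentation P 0 \<rightarrow> M given by g.\<close>
definition proj_res :: "('a::comm_ring_1 \<Rightarrow> 'm::ab_group_add \<Rightarrow> 'm) \<Rightarrow> (nat \<Rightarrow> 'm) \<Rightarrow> (nat \<Rightarrow> nat)
    \<Rightarrow> (nat \<Rightarrow> nat \<Rightarrow> nat \<Rightarrow> 'a) \<Rightarrow> (nat \<Rightarrow> nat \<Rightarrow> nat \<Rightarrow> 'a) \<Rightarrow> bool" where
  "proj_res smul g b E D \<longleftrightarrow>
     (let P = (\<lambda>i. mv (*) (E i) (b i) (b i) ` vecs (b i)) in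
       (\<forall>i. \<forall>x\<in>vecs (b i). mv (*) (E i) (b i) (b i) (mv (*) (E i) (b i) (b i) x) = mv (*) (E i) (b i) (b i) x)
     \<and> lin smul g (b 0) ` P 0 = UNIV
     \<and> {x \<in> P 0. lin smul g (b 0) x = 0} = mv (*) (D 1) (b 0) (b 1) ` P 1
     \<and> (\<forall>i\<ge>1. {x \<in> P i. mv (*) (D i) (b (i - 1)) (b i) x = 0}
                 = mv (*) (D (Suc i)) (b i) (b (Suc i)) ` P (Suc i)))"

definition idm :: "nat \<Rightarrow> nat \<Rightarrow> nat \<Rightarrow> 'a::comm_ring_1" where
  "idm i j k = (if j = k then 1 else 0)"

definition free_res :: "('a::comm_ring_1 \<Rightarrow> 'm::ab_group_add \<Rightarrow> 'm) \<Rightarrow> (nat \<Rightarrow> 'm) \<Rightarrow> (nat \<Rightarrow> nat)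
    \<Rightarrow> (nat \<Rightarrow> nat \<Rightarrow> nat \<Rightarrow> 'a) \<Rightarrow> bool" where
  "free_res smul g b D \<longleftrightarrow> proj_res smul g b idm D"

definition finite_pd :: "('a::comm_ring_1 \<Rightarrow> 'm::ab_group_add \<Rightarrow> 'm) \<Rightarrow> bool" where
  "finite_pd smul \<longleftrightarrow> (\<exists>g b E D n. proj_res smul g b E D \<and>
      (\<forall>i>n. mv (*) (E i) (b i) (b i) ` vecs (b i) = {0}))"

text \<open>Length of Tor_s(M,N), computed as the homology of F \<otimes>_R N for a (chosen) finite free
  resolution F of M.  F_i \<otimes>_R N = N^(b i), the tensor product using the action act of R on N;
  the length is measured with respect to the R-module structure sc on N
  (act = sc for an ordinary module; for the Frobenius twist they differ).\<close>
definition tor_len :: "('a::comm_ring_1 \<Rightarrow> 'm::ab_group_add \<Rightarrow> 'm) \<Rightarrow> ('a \<Rightarrow> 'n::ab_group_add \<Rightarrow> 'n)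
    \<Rightarrow> ('a \<Rightarrow> 'n \<Rightarrow> 'n) \<Rightarrow> nat \<Rightarrow> enat" where
  "tor_len smul act sc s =
    (let (g, b, D) = (SOME (g, b, D). free_res smul g b D);
         Z = {y \<in> (vecs (b s) :: (nat \<Rightarrow> 'n) set). s = 0 \<or> mv act (D s) (b (s - 1)) (b s) y = 0};
         B = mv act (D (Suc s)) (b s) (b (Suc s)) ` vecs (b (Suc s))
     in len (\<lambda>_. 0) (\<lambda>x y j. x j + y j) (\<lambda>c x j. sc c (x j)) B Z)"

text \<open>Frobenius twist: action of a on the module {}^{\<phi>^r}R, namely a \<cdot> b = a^(p^r) b.\<close>
definition frob_act :: "nat \<Rightarrow> nat \<Rightarrow> 'a::comm_ring_1 \<Rightarrow> 'a \<Rightarrow> 'a" where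
  "frob_act p r a x = a ^ (p ^ r) * x"

end

theory Submission
  imports Defs
begin

definition chn :: "('a \<Rightarrow> 'v::ab_group_add \<Rightarrow> 'v) \<Rightarrow> 'v set \<Rightarrow> 'v set \<Rightarrow> nat \<Rightarrow> (nat \<Rightarrow> 'v set) \<Rightarrow> bool" where
  "chn sc A B n C \<longleftrightarrow> C 0 = A \<and> C n = B \<and> (\<forall>i\<le>n. is_submod 0 (+) sc (C i)) \<and> (\<forall>i<n. C i \<subset> C (Suc i))"

lemma len_chn: "len 0 (+) sc A B = Sup {enat n | n. \<exists>C. chn sc A B n C}"
  unfolding len_def chn_def by simp

lemma len_ge: "chn sc A B n C \<Longrightarrow> enat n \<le> len 0 (+) sc A B"
  unfolding len_chn by (rule Sup_upper) blast

lemma len_le: "(\<And>n C. chn sc A B n C \<Longrightarrow> enat n \<le> x) \<Longrightarrow> len 0 (+) sc A B \<le> x"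
  unfolding len_chn by (rule Sup_least) blast

lemma chn_mono: "chn sc A B n C \<Longrightarrow> i \<le> j \<Longrightarrow> j \<le> n \<Longrightarrow> C i \<subseteq> C j"
proof (induction j)
  case 0 thus ?case by simp
next
  case (Suc j)
  show ?case
  proof (cases "i = Suc j")
    case False
    hence "C i \<subseteq> C j" using Suc by auto
    moreover have "C j \<subset> C (Suc j)" using Suc.prems unfolding chn_def by auto
    ultimately show ?thesis by auto
  qed simp
qed

lemma sm_0: "is_submod 0 (+) sc S \<Longrightarrow> 0 \<in> S"
  unfolding is_submod_def by auto
lemma sm_add: "is_submod 0 (+) sc S \<Longrightarrow> x \<in> S \<Longrightarrow> y \<in> S \<Longrightarrow> x + y \<in> S"
  unfolding is_submod_def by auto
lemma sm_scale: "is_submod 0 (+) sc S \<Longrightarrow> x \<in> S \<Longrightarrow> sc c x \<in> S"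
  unfolding is_submod_def by auto
lemma sm_uminus: "module sc \<Longrightarrow> is_submod 0 (+) sc S \<Longrightarrow> x \<in> S \<Longrightarrow> - x \<in> S"
  using sm_scale[of sc S x "-1"] by (simp add: module.scale_minus_left module.scale_one)
lemma sm_diff: "module sc \<Longrightarrow> is_submod 0 (+) sc S \<Longrightarrow> x \<in> S \<Longrightarrow> y \<in> S \<Longrightarrow> x - y \<in> S"
  using sm_add[of sc S x "- y"] sm_uminus[of sc S y] by simp
lemma sm_sum: "is_submod 0 (+) sc S \<Longrightarrow> (\<And>i. i \<in> I \<Longrightarrow> f i \<in> S) \<Longrightarrow> sum f I \<in> S"
  by (induction I rule: infinite_finite_induct) (auto simp: sm_0 sm_add)
lemma sm_UNIV: "is_submod 0 (+) sc UNIV"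
  unfolding is_submod_def by auto
lemma sm_zero: "module sc \<Longrightarrow> is_submod 0 (+) sc {0}"
  unfolding is_submod_def by (simp add: module.scale_zero_right)

lemma chn_exists:
  assumes "is_submod 0 (+) sc A" "is_submod 0 (+) sc B" "A \<subseteq> B"
  shows "\<exists>n C. chn sc A B n C"
proof (cases "A = B")
  case True thus ?thesis using assms by (intro exI[of _ 0] exI[of _ "\<lambda>_. A"]) (simp add: chn_def)
next
  case False thus ?thesis using assms
    by (intro exI[of _ 1] exI[of _ "\<lambda>i. if i = 0 then A else B"]) (auto simp: chn_def le_Suc_eq)
qed

lemma len_refl:
  fixes sc :: "'a::comm_ring_1 \<Rightarrow> 'v::ab_group_add \<Rightarrow> 'v"
  shows "len 0 (+) sc A A = 0"
proof -
  have "len 0 (+) sc A A \<le> 0"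
  proof (rule len_le)
    fix n C assume c: "chn sc A A n C"
    show "enat n \<le> 0"
    proof (rule ccontr)
      assume "\<not> enat n \<le> 0" hence "n > 0" by (simp add: zero_enat_def)
      hence "C 0 \<subset> C 1" "C 1 \<subseteq> C n" using c chn_mono[OF c, of 1 n] unfolding chn_def by auto
      thus False using c unfolding chn_def by auto
    qed
  qed
  thus ?thesis by simp
qed

lemma len_pos:
  fixes sc :: "'a::comm_ring_1 \<Rightarrow> 'v::ab_group_add \<Rightarrow> 'v"
  shows "is_submod 0 (+) sc A \<Longrightarrow> is_submod 0 (+) sc B \<Longrightarrow> A \<subset> B \<Longrightarrow> 1 \<le> len 0 (+) sc A B"
  using len_ge[of sc A B 1 "\<lambda>i. if i = 0 then A else B"] by (auto simp: chn_def le_Suc_eq one_enat_def)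

lemma weak_chain_ex:
  assumes "\<forall>i\<le>n. is_submod 0 (+) sc (C i)" "\<forall>i<n. C i \<subseteq> C (Suc i)"
  shows "\<exists>C'. chn sc (C 0) (C n) (card {i. i<n \<and> C i \<noteq> C (Suc i)}) C'"
  using assms
proof (induction n)
  case 0 then show ?case by (intro exI[of _ "\<lambda>_. C 0"]) (simp add: chn_def)
next
  case (Suc n)
  then obtain C' where c: "chn sc (C 0) (C n) (card {i. i<n \<and> C i \<noteq> C (Suc i)}) C'" by auto
  define k where "k = card {i. i<n \<and> C i \<noteq> C (Suc i)}"
  show ?case
  proof (cases "C n = C (Suc n)")
    case True
    have "{i. i<Suc n \<and> C i \<noteq> C (Suc i)} = {i. i<n \<and> C i \<noteq> C (Suc i)}" using True less_Suc_eq by auto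
    with c True show ?thesis by auto
  next
    case False
    note nd = False
    have "{i. i<Suc n \<and> C i \<noteq> C (Suc i)} = insert n {i. i<n \<and> C i \<noteq> C (Suc i)}" using False less_Suc_eq by auto
    hence card: "card {i. i<Suc n \<and> C i \<noteq> C (Suc i)} = Suc k" unfolding k_def by simp
    define C'' where "C'' = (\<lambda>i. if i \<le> k then C' i else C (Suc n))"
    have "chn sc (C 0) (C (Suc n)) (Suc k) C''"
      unfolding chn_def
    proof (intro conjI allI impI)
      show "C'' 0 = C 0" using c unfolding C''_def chn_def by simp
      show "C'' (Suc k) = C (Suc n)" unfolding C''_def by simp
    next
      fix i assume "i \<le> Suc k"
      thus "is_submod 0 (+) sc (C'' i)" using c Suc.prems unfolding C''_def chn_def k_def by auto
    next
      fix i assume i: "i < Suc k"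
      show "C'' i \<subset> C'' (Suc i)"
      proof (cases "i < k")
        case True thus ?thesis using c unfolding C''_def chn_def k_def by auto
      next
        case False
        hence "i = k" using i by simp
        moreover have "C' k = C n" using c unfolding chn_def k_def by simp
        moreover have "C n \<subset> C (Suc n)" using nd Suc.prems by auto
        ultimately show ?thesis unfolding C''_def by simp
      qed
    qed
    thus ?thesis using card by auto
  qed
qed

lemma enat_Sup_add_le:
  fixes X Y :: "enat set"
  assumes "X \<noteq> {}" "Y \<noteq> {}" "\<And>x y. x\<in>X \<Longrightarrow> y\<in>Y \<Longrightarrow> x + y \<le> z"
  shows "Sup X + Sup Y \<le> z"
proof (cases z)
  case infinity thus ?thesis by simp
next
  case (enat N)
  obtain x0 y0 where xy: "x0\<in>X" "y0\<in>Y" using assms by blast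
  have bx: "x \<le> enat N" if "x \<in> X" for x
    using assms(3)[OF that xy(2)] enat by (metis add.right_neutral add_left_mono order_trans zero_le)
  have by': "y \<le> enat N" if "y \<in> Y" for y
    using assms(3)[OF xy(1) that] enat by (metis add.left_neutral add_right_mono order_trans zero_le)
  have fx: "finite X" using bx finite_enat_bounded by blast
  have fy: "finite Y" using by' finite_enat_bounded by blast
  have "Sup X = Max X" "Sup Y = Max Y" using fx fy assms(1,2) by (simp_all add: Sup_enat_def)
  moreover have "Max X \<in> X" "Max Y \<in> Y" using fx fy assms(1,2) by simp_all
  ultimately show ?thesis using assms(3) by simp
qed

lemma chn_concat:
  assumes c1: "chn sc A B n1 C1" and c2: "chn sc B C n2 C2"
  shows "chn sc A C (n1 + n2) (\<lambda>i. if i \<le> n1 then C1 i else C2 (i - n1))"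
  unfolding chn_def
proof (intro conjI allI impI)
  show "(if 0 \<le> n1 then C1 0 else C2 (0 - n1)) = A" using c1 by (simp add: chn_def)
  show "(if n1 + n2 \<le> n1 then C1 (n1 + n2) else C2 (n1 + n2 - n1)) = C"
    using c1 c2 by (auto simp: chn_def)
next
  fix i assume "i \<le> n1 + n2"
  thus "is_submod 0 (+) sc (if i \<le> n1 then C1 i else C2 (i - n1))" using c1 c2 by (auto simp: chn_def)
next
  fix i assume i: "i < n1 + n2"
  show "(if i \<le> n1 then C1 i else C2 (i - n1)) \<subset> (if Suc i \<le> n1 then C1 (Suc i) else C2 (Suc i - n1))"
  proof (cases "i < n1")
    case True thus ?thesis using c1 by (auto simp: chn_def)
  next
    case False
    have e: "(if i \<le> n1 then C1 i else C2 (i - n1)) = C2 (i - n1)"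
      using False c1 c2 by (auto simp: chn_def)
    have "C2 (i - n1) \<subset> C2 (Suc (i - n1))" using c2 i False by (auto simp: chn_def)
    moreover have "Suc i - n1 = Suc (i - n1)" using False by simp
    ultimately show ?thesis using e False by auto
  qed
qed

lemma len_add:
  assumes m: "module sc" and sA: "is_submod 0 (+) sc A" and sB: "is_submod 0 (+) sc B"
    and sC: "is_submod 0 (+) sc C" and AB: "A \<subseteq> B" and BC: "B \<subseteq> C"
  shows "len 0 (+) sc A C = len 0 (+) sc A B + len 0 (+) sc B C"
proof (rule antisym)
  show "len 0 (+) sc A C \<le> len 0 (+) sc A B + len 0 (+) sc B C"
  proof (rule len_le)
    fix n Ch assume ch: "chn sc A C n Ch"
    define C1 where "C1 i = Ch i \<inter> B" for i
    define C2 where "C2 i = {x + y | x y. x \<in> Ch i \<and> y \<in> B}" for i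
    have sCh: "is_submod 0 (+) sc (Ch i)" if "i \<le> n" for i using ch that by (auto simp: chn_def)
    have sub1: "\<forall>i\<le>n. is_submod 0 (+) sc (C1 i)"
      using sCh sB unfolding C1_def is_submod_def by auto
    have sub2: "\<forall>i\<le>n. is_submod 0 (+) sc (C2 i)"
    proof (intro allI impI)
      fix i assume i: "i \<le> n"
      show "is_submod 0 (+) sc (C2 i)"
        unfolding is_submod_def C2_def
      proof (intro conjI ballI allI)
        show "0 \<in> {x + y |x y. x \<in> Ch i \<and> y \<in> B}"
          using sm_0[OF sCh[OF i]] sm_0[OF sB] by force
      next
        fix u v assume "u \<in> {x + y |x y. x \<in> Ch i \<and> y \<in> B}" "v \<in> {x + y |x y. x \<in> Ch i \<and> y \<in> B}"
        then obtain x y x' y' where "u = x + y" "v = x' + y'" "x \<in> Ch i" "y \<in> B" "x' \<in> Ch i" "y' \<in> B" by auto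
        thus "u + v \<in> {x + y |x y. x \<in> Ch i \<and> y \<in> B}"
          using sm_add[OF sCh[OF i]] sm_add[OF sB]
          by (intro CollectI exI[of _ "x + x'"] exI[of _ "y + y'"]) (simp add: algebra_simps)
      next
        fix c u assume "u \<in> {x + y |x y. x \<in> Ch i \<and> y \<in> B}"
        then obtain x y where "u = x + y" "x \<in> Ch i" "y \<in> B" by auto
        thus "sc c u \<in> {x + y |x y. x \<in> Ch i \<and> y \<in> B}"
          using sm_scale[OF sCh[OF i]] sm_scale[OF sB] module.scale_right_distrib[OF m]
          by blast
      qed
    qed
    have mono: "Ch i \<subseteq> Ch (Suc i)" if "i < n" for i using ch that by (auto simp: chn_def)
    have mono1: "\<forall>i<n. C1 i \<subseteq> C1 (Suc i)" using mono unfolding C1_def by auto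
    have mono2: "\<forall>i<n. C2 i \<subseteq> C2 (Suc i)" using mono unfolding C2_def by blast
    have Ch0: "Ch 0 = A" and Chn: "Ch n = C" using ch by (auto simp: chn_def)
    have C10: "C1 0 = A" using Ch0 AB unfolding C1_def by auto
    have C1n: "C1 n = B" using Chn BC unfolding C1_def by auto
    have C20: "C2 0 = B"
    proof
      show "C2 0 \<subseteq> B" using Ch0 AB sm_add[OF sB] unfolding C2_def by auto
      show "B \<subseteq> C2 0" unfolding C2_def Ch0 using sm_0[OF sA] by force
    qed
    have C2n: "C2 n = C"
    proof
      show "C2 n \<subseteq> C" using Chn BC sm_add[OF sC] unfolding C2_def by auto
      show "C \<subseteq> C2 n" unfolding C2_def Chn using sm_0[OF sB] by force
    qed
    have key: "C1 i \<noteq> C1 (Suc i) \<or> C2 i \<noteq> C2 (Suc i)" if i: "i < n" for i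
    proof (rule ccontr)
      assume "\<not> ?thesis"
      hence e1: "C1 i = C1 (Suc i)" and e2: "C2 i = C2 (Suc i)" by auto
      obtain x where x: "x \<in> Ch (Suc i)" "x \<notin> Ch i" using ch i unfolding chn_def by blast
      have "x \<in> C2 (Suc i)" unfolding C2_def using x sm_0[OF sB] by force
      hence "x \<in> C2 i" using e2 by simp
      then obtain c b where cb: "x = c + b" "c \<in> Ch i" "b \<in> B" unfolding C2_def by auto
      have "b = x - c" using cb by simp
      moreover have "c \<in> Ch (Suc i)" using cb mono[OF i] by auto
      ultimately have "b \<in> Ch (Suc i)" using sm_diff[OF m sCh[of "Suc i"]] x i by simp
      hence "b \<in> C1 (Suc i)" using cb unfolding C1_def by simp
      hence "b \<in> Ch i" using e1 unfolding C1_def by blast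
      hence "x \<in> Ch i" using cb sm_add[OF sCh[of i]] i by simp
      thus False using x by simp
    qed
    define K1 where "K1 = {i. i<n \<and> C1 i \<noteq> C1 (Suc i)}"
    define K2 where "K2 = {i. i<n \<and> C2 i \<noteq> C2 (Suc i)}"
    have "{..<n} \<subseteq> K1 \<union> K2" using key unfolding K1_def K2_def by auto
    hence "n \<le> card (K1 \<union> K2)" by (metis card_lessThan card_mono finite_Un K1_def K2_def finite_Collect_conjI finite_lessThan lessThan_def)
    also have "\<dots> \<le> card K1 + card K2" by (rule card_Un_le)
    finally have nle: "n \<le> card K1 + card K2" .
    obtain D1 where "chn sc A B (card K1) D1" using weak_chain_ex[OF sub1 mono1] C10 C1n K1_def by auto
    hence l1: "enat (card K1) \<le> len 0 (+) sc A B" by (rule len_ge)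
    obtain D2 where "chn sc B C (card K2) D2" using weak_chain_ex[OF sub2 mono2] C20 C2n K2_def by auto
    hence l2: "enat (card K2) \<le> len 0 (+) sc B C" by (rule len_ge)
    have "enat n \<le> enat (card K1) + enat (card K2)" using nle by simp
    also have "\<dots> \<le> len 0 (+) sc A B + len 0 (+) sc B C" using l1 l2 by (rule add_mono)
    finally show "enat n \<le> len 0 (+) sc A B + len 0 (+) sc B C" .
  qed
next
  show "len 0 (+) sc A B + len 0 (+) sc B C \<le> len 0 (+) sc A C"
    unfolding len_chn[of sc A B] len_chn[of sc B C]
  proof (rule enat_Sup_add_le)
    show "{enat n |n. \<exists>C. chn sc A B n C} \<noteq> {}" using chn_exists[OF sA sB AB] by auto
    show "{enat n |n. \<exists>Ca. chn sc B C n Ca} \<noteq> {}" using chn_exists[OF sB sC BC] by auto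
  next
    fix x y assume "x \<in> {enat n |n. \<exists>C. chn sc A B n C}" "y \<in> {enat n |n. \<exists>Ca. chn sc B C n Ca}"
    then obtain n1 n2 C1 C2 where "x = enat n1" "y = enat n2" "chn sc A B n1 C1" "chn sc B C n2 C2" by auto
    thus "x + y \<le> len 0 (+) sc A C" using len_ge[OF chn_concat] by fastforce
  qed
qed

lemma len_map:
  fixes sc :: "'a::comm_ring_1 \<Rightarrow> 'v::ab_group_add \<Rightarrow> 'v" and sc' :: "'a \<Rightarrow> 'w::ab_group_add \<Rightarrow> 'w"
    and \<phi> :: "'v \<Rightarrow> 'w"
  assumes m: "module sc" and m': "module sc'"
    and add: "\<And>x y. \<phi> (x + y) = \<phi> x + \<phi> y" and lin: "\<And>c x. \<phi> (sc c x) = sc' c (\<phi> x)"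
    and sA: "is_submod 0 (+) sc A" and sB: "is_submod 0 (+) sc B" and AB: "A \<subseteq> B"
    and ker: "\<And>x. x \<in> B \<Longrightarrow> \<phi> x = 0 \<Longrightarrow> x \<in> A"
  shows "len 0 (+) sc A B = len 0 (+) sc' (\<phi> ` A) (\<phi> ` B)"
proof -
  interpret additive \<phi> by standard (rule add)
  have img: "is_submod 0 (+) sc' (\<phi> ` S)" if "is_submod 0 (+) sc S" for S
    unfolding is_submod_def
  proof (intro conjI ballI allI)
    show "0 \<in> \<phi> ` S" using that zero unfolding is_submod_def by (metis image_eqI)
  next
    fix u v assume "u \<in> \<phi> ` S" "v \<in> \<phi> ` S"
    then obtain a b where "a \<in> S" "b \<in> S" "u = \<phi> a" "v = \<phi> b" by auto
    thus "u + v \<in> \<phi> ` S" using that add[of a b] unfolding is_submod_def by (metis image_eqI)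
  next
    fix c u assume "u \<in> \<phi> ` S"
    then obtain a where "a \<in> S" "u = \<phi> a" by auto
    thus "sc' c u \<in> \<phi> ` S" using that lin[of c a] unfolding is_submod_def by (metis image_eqI)
  qed
  have pre: "is_submod 0 (+) sc {x\<in>B. \<phi> x \<in> D}" if "is_submod 0 (+) sc' D" for D
    using that sB unfolding is_submod_def by (auto simp: zero lin add)
  have bk: "x \<in> C" if "A \<subseteq> C" "C \<subseteq> B" "is_submod 0 (+) sc C" "x \<in> B" "\<phi> x = \<phi> c" "c \<in> C" for x c C
  proof -
    have "x - c \<in> B" using sm_diff[OF m sB] that by auto
    moreover have "\<phi> (x - c) = 0" using that by (simp add: diff)
    ultimately have "x - c \<in> A" using ker by auto
    hence "(x - c) + c \<in> C" using sm_add[OF that(3), of "x - c" c] that(1,6) by blast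
    thus ?thesis by simp
  qed
  have "(\<exists>C. chn sc A B n C) \<longleftrightarrow> (\<exists>D. chn sc' (\<phi> ` A) (\<phi> ` B) n D)" for n
  proof
    assume "\<exists>C. chn sc A B n C"
    then obtain C where c: "chn sc A B n C" by auto
    have AC: "A \<subseteq> C i" "C i \<subseteq> B" "is_submod 0 (+) sc (C i)" if "i \<le> n" for i
      using chn_mono[OF c, of 0 i] chn_mono[OF c, of i n] c that unfolding chn_def by auto
    have "chn sc' (\<phi> ` A) (\<phi> ` B) n (\<lambda>i. \<phi> ` C i)"
      unfolding chn_def
    proof (intro conjI allI impI)
      show "\<phi> ` C 0 = \<phi> ` A" "\<phi> ` C n = \<phi> ` B" using c unfolding chn_def by auto
    next
      fix i assume "i \<le> n" thus "is_submod 0 (+) sc' (\<phi> ` C i)" using AC img by auto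
    next
      fix i assume i: "i < n"
      have sub: "C i \<subset> C (Suc i)" using c i unfolding chn_def by auto
      then obtain x where x: "x \<in> C (Suc i)" "x \<notin> C i" by auto
      have "\<phi> x \<notin> \<phi> ` C i"
      proof
        assume "\<phi> x \<in> \<phi> ` C i"
        then obtain c' where "c' \<in> C i" "\<phi> x = \<phi> c'" by auto
        moreover have "x \<in> B" using AC(2)[of "Suc i"] i x by auto
        ultimately have "x \<in> C i" using bk[of "C i" x c'] AC[of i] i by auto
        thus False using x by simp
      qed
      thus "\<phi> ` C i \<subset> \<phi> ` C (Suc i)" using sub x by auto
    qed
    thus "\<exists>D. chn sc' (\<phi> ` A) (\<phi> ` B) n D" by blast
  next
    assume "\<exists>D. chn sc' (\<phi> ` A) (\<phi> ` B) n D"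
    then obtain D where d: "chn sc' (\<phi> ` A) (\<phi> ` B) n D" by auto
    have Dsub: "D i \<subseteq> \<phi> ` B" "is_submod 0 (+) sc' (D i)" if "i \<le> n" for i
      using chn_mono[OF d, of i n] d that unfolding chn_def by auto
    have "chn sc A B n (\<lambda>i. {x\<in>B. \<phi> x \<in> D i})"
      unfolding chn_def
    proof (intro conjI allI impI)
      show "{x \<in> B. \<phi> x \<in> D 0} = A"
      proof
        show "{x \<in> B. \<phi> x \<in> D 0} \<subseteq> A"
        proof
          fix x assume "x \<in> {x \<in> B. \<phi> x \<in> D 0}"
          then obtain a where "x \<in> B" "a \<in> A" "\<phi> x = \<phi> a" using d unfolding chn_def by auto
          thus "x \<in> A" using bk[of A x a] sA AB by auto
        qed
        show "A \<subseteq> {x \<in> B. \<phi> x \<in> D 0}" using AB d unfolding chn_def by auto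
      qed
      show "{x \<in> B. \<phi> x \<in> D n} = B" using d unfolding chn_def by auto
    next
      fix i assume "i \<le> n" thus "is_submod 0 (+) sc {x \<in> B. \<phi> x \<in> D i}" using pre Dsub by auto
    next
      fix i assume i: "i < n"
      have sub: "D i \<subset> D (Suc i)" using d i unfolding chn_def by auto
      then obtain y where y: "y \<in> D (Suc i)" "y \<notin> D i" by auto
      then obtain x where "x \<in> B" "y = \<phi> x" using Dsub[of "Suc i"] i by auto
      thus "{x \<in> B. \<phi> x \<in> D i} \<subset> {x \<in> B. \<phi> x \<in> D (Suc i)}" using sub y by auto
    qed
    thus "\<exists>C. chn sc A B n C" by blast
  qed
  thus ?thesis unfolding len_chn by simp
qed

lemma len_eq_fin:
  fixes sc :: "'a::comm_ring_1 \<Rightarrow> 'v::ab_group_add \<Rightarrow> 'v"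
  assumes m: "module sc" and sA: "is_submod 0 (+) sc A" and sB: "is_submod 0 (+) sc B"
    and sC: "is_submod 0 (+) sc C" and AB: "A \<subseteq> B" and BC: "B \<subseteq> C"
    and eq: "len 0 (+) sc A C = len 0 (+) sc A B" and fin: "len 0 (+) sc A C \<noteq> \<infinity>"
  shows "B = C"
proof (rule ccontr)
  assume "B \<noteq> C"
  hence "1 \<le> len 0 (+) sc B C" using len_pos[OF sB sC] BC by auto
  moreover have "len 0 (+) sc A C = len 0 (+) sc A B + len 0 (+) sc B C" by (rule len_add[OF m sA sB sC AB BC])
  ultimately show False using eq fin
    by (cases "len 0 (+) sc B C"; cases "len 0 (+) sc A B") (auto simp: one_enat_def)
qed

lemma len_mono_right:
  fixes sc :: "'a::comm_ring_1 \<Rightarrow> 'v::ab_group_add \<Rightarrow> 'v"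
  assumes m: "module sc" and sA: "is_submod 0 (+) sc A" and sB: "is_submod 0 (+) sc B"
    and sC: "is_submod 0 (+) sc C" and AB: "A \<subseteq> B" and BC: "B \<subseteq> C"
  shows "len 0 (+) sc A B \<le> len 0 (+) sc A C"
  using len_add[OF assms] by simp

definition vsc :: "('a \<Rightarrow> 'v \<Rightarrow> 'v) \<Rightarrow> 'a \<Rightarrow> ('i \<Rightarrow> 'v) \<Rightarrow> 'i \<Rightarrow> 'v" where
  "vsc sc = (\<lambda>c x j. sc c (x j))"

lemma vsc_app: "vsc sc c x j = sc c (x j)" by (simp add: vsc_def)

lemma module_vsc: "module sc \<Longrightarrow> module (vsc sc)"
  unfolding module_def by (auto simp: fun_eq_iff vsc_def)

lemma zero_fun_lam: "(\<lambda>_. 0) = (0 :: 'i \<Rightarrow> 'v::zero)" by (simp add: fun_eq_iff)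
lemma plus_fun_lam: "(\<lambda>x y j. x j + y j) = ((+) :: ('i \<Rightarrow> 'v::plus) \<Rightarrow> _)" by (simp add: fun_eq_iff)

definition S :: "nat set \<Rightarrow> (nat \<Rightarrow> 'v::zero) set" where
  "S I = {x. \<forall>j. j \<notin> I \<longrightarrow> x j = 0}"

lemma sm_S: "module sc \<Longrightarrow> is_submod 0 (+) (vsc sc) (S I)"
  unfolding is_submod_def S_def by (auto simp: module.scale_zero_right vsc_def)

lemma S_empty: "S {} = {0}"
  unfolding S_def by (auto simp: fun_eq_iff)

lemma vecs_S: "vecs n = S {..<n}"
  unfolding vecs_def S_def by auto

lemma len_S_step:
  fixes sc :: "'a::comm_ring_1 \<Rightarrow> 'v::ab_group_add \<Rightarrow> 'v"
  assumes m: "module sc" and j: "j \<notin> I"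
  shows "len 0 (+) (vsc sc) (S I) (S (insert j I)) = len 0 (+) sc {0} UNIV"
proof -
  have "len 0 (+) (vsc sc) (S I) (S (insert j I)) = len 0 (+) sc ((\<lambda>x. x j) ` S I) ((\<lambda>x. x j) ` S (insert j I))"
    by (rule len_map[OF module_vsc[OF m] m]) (auto simp: sm_S[OF m] vsc_app, auto simp: S_def)
  moreover have "(\<lambda>x. x j) ` (S I :: (nat \<Rightarrow> 'v) set) = {0}" using j unfolding S_def by (auto intro!: image_eqI[of _ _ 0])
  moreover have "(\<lambda>x. x j) ` (S (insert j I) :: (nat \<Rightarrow> 'v) set) = UNIV"
  proof -
    have "z \<in> (\<lambda>x. x j) ` S (insert j I)" for z :: 'v
      by (rule image_eqI[of _ _ "\<lambda>l. if l = j then z else 0"]) (auto simp: S_def)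
    thus ?thesis by blast
  qed
  ultimately show ?thesis by simp
qed

lemma len_S:
  fixes sc :: "'a::comm_ring_1 \<Rightarrow> 'v::ab_group_add \<Rightarrow> 'v"
  assumes m: "module sc" and fin: "finite I"
  shows "len 0 (+) (vsc sc) {0} (S I) = of_nat (card I) * len 0 (+) sc {0} UNIV"
  using fin
proof (induction I rule: finite_induct)
  case empty thus ?case by (simp only: S_empty len_refl card.empty of_nat_0 mult_zero_left)
next
  case (insert j I)
  have "len 0 (+) (vsc sc) {0} (S (insert j I)) = len 0 (+) (vsc sc) {0} (S I) + len 0 (+) (vsc sc) (S I) (S (insert j I))"
    by (rule len_add[OF module_vsc[OF m] sm_zero[OF module_vsc[OF m]] sm_S[OF m] sm_S[OF m]])
       (auto simp: S_def)
  also have "\<dots> = of_nat (card I) * len 0 (+) sc {0} UNIV + len 0 (+) sc {0} UNIV"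
    by (simp only: insert.IH len_S_step[OF m insert(2)])
  also have "\<dots> = of_nat (card (insert j I)) * len 0 (+) sc {0} UNIV"
    using insert by (simp add: algebra_simps)
  finally show ?case .
qed

lemma ifm1: "(if P then a else 0) * b = (if P then a * b else (0::'a::comm_ring_1))" by simp
lemma ifm2: "b * (if P then a else 0) = (if P then b * a else (0::'a::comm_ring_1))" by simp

definition im1 :: "nat \<Rightarrow> nat \<Rightarrow> 'a::comm_ring_1" where "im1 i k = (if i = k then 1 else 0)"
definition mm :: "nat \<Rightarrow> (nat \<Rightarrow> nat \<Rightarrow> 'a::comm_ring_1) \<Rightarrow> (nat \<Rightarrow> nat \<Rightarrow> 'a) \<Rightarrow> nat \<Rightarrow> nat \<Rightarrow> 'a" where
  "mm n A B = (\<lambda>i k. \<Sum>l<n. A i l * B l k)"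
definition meq :: "nat \<Rightarrow> nat \<Rightarrow> (nat \<Rightarrow> nat \<Rightarrow> 'a) \<Rightarrow> (nat \<Rightarrow> nat \<Rightarrow> 'a) \<Rightarrow> bool" where
  "meq m n A B \<longleftrightarrow> (\<forall>i<m. \<forall>j<n. A i j = B i j)"
definition invp :: "nat \<Rightarrow> (nat \<Rightarrow> nat \<Rightarrow> 'a::comm_ring_1) \<Rightarrow> (nat \<Rightarrow> nat \<Rightarrow> 'a) \<Rightarrow> bool" where
  "invp n U Ui \<longleftrightarrow> meq n n (mm n U Ui) im1 \<and> meq n n (mm n Ui U) im1"

lemma module_mult: "module ((*) :: 'a::comm_ring_1 \<Rightarrow> 'a \<Rightarrow> 'a)"
  by standard (simp_all add: algebra_simps)

lemma mm_assoc: "mm n (mm m A B) C = mm m A (mm n B C)"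
proof (intro ext)
  fix i k
  have "mm n (mm m A B) C i k = (\<Sum>l<n. \<Sum>l'<m. A i l' * (B l' l * C l k))"
    by (simp add: mm_def sum_distrib_right mult.assoc)
  also have "\<dots> = (\<Sum>l'<m. \<Sum>l<n. A i l' * (B l' l * C l k))" by (rule sum.swap)
  also have "\<dots> = mm m A (mm n B C) i k" by (simp add: mm_def sum_distrib_left)
  finally show "mm n (mm m A B) C i k = mm m A (mm n B C) i k" .
qed

lemma mm_im1_left: "i < n \<Longrightarrow> mm n im1 B i k = B i k"
  by (simp add: mm_def im1_def ifm1)
lemma mm_im1_right: "k < n \<Longrightarrow> mm n A im1 i k = A i k"
  by (simp add: mm_def im1_def ifm2)
lemma mm_cong_r: "(\<And>l. l < n \<Longrightarrow> X l k = Y l k) \<Longrightarrow> mm n A X i k = mm n A Y i k"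
  unfolding mm_def by simp
lemma mm_cong_l: "(\<And>l. l < n \<Longrightarrow> X i l = Y i l) \<Longrightarrow> mm n X B i k = mm n Y B i k"
  unfolding mm_def by simp

lemma invp_sym: "invp n U Ui \<Longrightarrow> invp n Ui U" unfolding invp_def by simp

lemma invp_im1: "invp n im1 im1"
  unfolding invp_def meq_def by (simp add: mm_im1_left)

lemma invp_mult:
  assumes a: "invp n A Ai" and b: "invp n B Bi"
  shows "invp n (mm n A B) (mm n Bi Ai)"
proof -
  have one: "meq n n (mm n (mm n A B) (mm n Bi Ai)) im1" if a: "invp n A Ai" and b: "invp n B Bi" for A Ai B Bi :: "nat \<Rightarrow> nat \<Rightarrow> 'a"
  proof -
    have "mm n (mm n A B) (mm n Bi Ai) i k = im1 i k" if ik: "i < n" "k < n" for i k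
    proof -
      have "mm n (mm n A B) (mm n Bi Ai) i k = mm n A (mm n (mm n B Bi) Ai) i k"
        by (simp add: mm_assoc)
      also have "\<dots> = mm n A Ai i k"
      proof (rule mm_cong_r)
        fix l assume l: "l < n"
        have "mm n (mm n B Bi) Ai l k = mm n im1 Ai l k"
          by (rule mm_cong_l) (use b l in \<open>auto simp: invp_def meq_def\<close>)
        thus "mm n (mm n B Bi) Ai l k = Ai l k" using l by (simp add: mm_im1_left)
      qed
      also have "\<dots> = im1 i k" using a ik by (auto simp: invp_def meq_def)
      finally show ?thesis .
    qed
    thus ?thesis unfolding meq_def by auto
  qed
  show ?thesis unfolding invp_def
    using one[OF a b] one[OF invp_sym[OF b] invp_sym[OF a]] by simp
qed

lemma mv_vecs: "mv act D m n x \<in> vecs m"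
  unfolding mv_def vecs_def by auto

lemma mv_comp:
  assumes m: "module act"
  shows "mv act (mm n A B) m p x = mv act A m n (mv act B n p x)"
proof -
  interpret module act by (rule m)
  have "(\<Sum>k<p. act (\<Sum>l<n. A j l * B l k) (x k)) = (\<Sum>l<n. act (A j l) (\<Sum>k<p. act (B l k) (x k)))" for j
  proof -
    have "(\<Sum>k<p. act (\<Sum>l<n. A j l * B l k) (x k)) = (\<Sum>k<p. \<Sum>l<n. act (A j l) (act (B l k) (x k)))"
      by (simp add: scale_sum_left)
    also have "\<dots> = (\<Sum>l<n. \<Sum>k<p. act (A j l) (act (B l k) (x k)))" by (rule sum.swap)
    also have "\<dots> = (\<Sum>l<n. act (A j l) (\<Sum>k<p. act (B l k) (x k)))" by (simp add: scale_sum_right)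
    finally show ?thesis .
  qed
  thus ?thesis unfolding mv_def mm_def by (simp add: fun_eq_iff)
qed

lemma mv_im1:
  assumes m: "module act" and x: "x \<in> vecs n"
  shows "mv act im1 n n x = x"
proof -
  interpret module act by (rule m)
  have "(\<Sum>k<n. act (if j = k then 1 else 0) (x k)) = x j" if "j < n" for j
  proof -
    have "(\<Sum>k<n. act (if j = k then 1 else 0) (x k)) = (\<Sum>k<n. if j = k then x k else 0)"
      by (rule sum.cong) auto
    thus ?thesis using that by simp
  qed
  thus ?thesis using x unfolding mv_def im1_def vecs_def by (auto simp: fun_eq_iff)
qed

lemma mv_meq: "meq m n A B \<Longrightarrow> mv act A m n x = mv act B m n x"
  unfolding mv_def meq_def by (simp add: fun_eq_iff)

lemma mv_add: "module act \<Longrightarrow> mv act D m n (x + y) = mv act D m n x + mv act D m n y"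
  unfolding mv_def by (auto simp: fun_eq_iff module.scale_right_distrib sum.distrib)

lemma mv_zero: "module act \<Longrightarrow> mv act D m n 0 = 0"
  unfolding mv_def by (auto simp: fun_eq_iff module.scale_zero_right)

lemma mv_diff: "module act \<Longrightarrow> mv act D m n (x - y) = mv act D m n x - mv act D m n y"
proof -
  assume m: "module act"
  interpret additive "mv act D m n" by standard (rule mv_add[OF m])
  show ?thesis by (rule diff)
qed

lemma mv_vsc:
  assumes m: "module act" and ms: "module sc" and cm: "\<And>a c v. act a (sc c v) = sc c (act a v)"
  shows "mv act D m n (vsc sc c x) = vsc sc c (mv act D m n x)"
  unfolding mv_def vsc_def
  by (auto simp: fun_eq_iff cm module.scale_sum_right[OF ms] module.scale_zero_right[OF ms])

lemma mat_eq_from_mv: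
  assumes "\<And>x. x \<in> vecs n \<Longrightarrow> mv (*) A m n x = mv (*) B m n x"
  shows "meq m n A (B :: nat \<Rightarrow> nat \<Rightarrow> 'a::comm_ring_1)"
  unfolding meq_def
proof (intro allI impI)
  fix i j assume ij: "i < m" "j < n"
  define e :: "nat \<Rightarrow> 'a" where "e = (\<lambda>l. if l = j then 1 else 0)"
  have "e \<in> vecs n" using ij unfolding e_def vecs_def by auto
  hence "mv (*) A m n e i = mv (*) B m n e i" using assms by simp
  moreover have "mv (*) C m n e i = C i j" for C :: "nat \<Rightarrow> nat \<Rightarrow> 'a"
    using ij unfolding mv_def e_def by (simp add: ifm2)
  ultimately show "A i j = B i j" by simp
qed

lemma invp_mv:
  assumes m: "module act" and inv: "invp n U Ui" and x: "x \<in> vecs n"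
  shows "mv act U n n (mv act Ui n n x) = x"
proof -
  have "mv act U n n (mv act Ui n n x) = mv act (mm n U Ui) n n x" by (simp add: mv_comp[OF m])
  also have "\<dots> = mv act im1 n n x" by (rule mv_meq) (use inv in \<open>simp add: invp_def\<close>)
  also have "\<dots> = x" by (rule mv_im1[OF m x])
  finally show ?thesis .
qed

definition ivt :: "nat \<Rightarrow> nat \<Rightarrow> nat \<Rightarrow> (nat \<Rightarrow> nat \<Rightarrow> 'a::comm_ring_1) \<Rightarrow> bool" where
  "ivt t m n B \<longleftrightarrow> (\<forall>i<m. \<forall>j<n. i < t \<or> j < t \<longrightarrow> B i j = im1 i j)"

definition sw :: "nat \<Rightarrow> nat \<Rightarrow> nat \<Rightarrow> nat" where
  "sw a b i = (if i = a then b else if i = b then a else i)"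
definition pr :: "(nat \<Rightarrow> nat) \<Rightarrow> nat \<Rightarrow> nat \<Rightarrow> 'a::comm_ring_1" where
  "pr \<sigma> i k = (if \<sigma> i = k then 1 else 0)"
definition pc :: "(nat \<Rightarrow> nat) \<Rightarrow> nat \<Rightarrow> nat \<Rightarrow> 'a::comm_ring_1" where
  "pc \<sigma> l j = (if \<sigma> j = l then 1 else 0)"

lemma sw_sw [simp]: "sw a b (sw a b i) = i" unfolding sw_def by auto
lemma sw_lt: "a < m \<Longrightarrow> b < m \<Longrightarrow> i < m \<Longrightarrow> sw a b i < m" unfolding sw_def by auto

lemma mm_pr: "\<sigma> i < m \<Longrightarrow> mm m (pr \<sigma>) B i j = B (\<sigma> i) j"
  unfolding mm_def pr_def by (simp add: ifm1)
lemma mm_pc: "\<sigma> j < n \<Longrightarrow> mm n B (pc \<sigma>) i j = B i (\<sigma> j)"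
  unfolding mm_def pc_def by (simp add: ifm2 eq_commute[of "\<sigma> j"])

lemma sw_inj: "sw a b i = sw a b j \<longleftrightarrow> i = j" by (metis sw_sw)

lemma invp_pr: "a < m \<Longrightarrow> b < m \<Longrightarrow> invp m (pr (sw a b) :: nat \<Rightarrow> nat \<Rightarrow> 'a::comm_ring_1) (pr (sw a b))"
proof -
  assume ab: "a < m" "b < m"
  have "mm m (pr (sw a b)) (pr (sw a b)) i k = (im1 i k :: 'a)" if "i < m" for i k
  proof -
    have "mm m (pr (sw a b)) (pr (sw a b)) i k = pr (sw a b) (sw a b i) k"
      by (rule mm_pr) (rule sw_lt[OF ab that])
    also have "\<dots> = im1 i k" unfolding pr_def im1_def by simp
    finally show ?thesis .
  qed
  thus ?thesis unfolding invp_def meq_def by simp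
qed

lemma invp_pc: "a < n \<Longrightarrow> b < n \<Longrightarrow> invp n (pc (sw a b) :: nat \<Rightarrow> nat \<Rightarrow> 'a::comm_ring_1) (pc (sw a b))"
proof -
  assume ab: "a < n" "b < n"
  have "mm n (pc (sw a b)) (pc (sw a b)) i k = (im1 i k :: 'a)" if "k < n" for i k
  proof -
    have "mm n (pc (sw a b)) (pc (sw a b)) i k = pc (sw a b) i (sw a b k)"
      by (rule mm_pc) (rule sw_lt[OF ab that])
    also have "\<dots> = im1 i k" unfolding pc_def im1_def by auto
    finally show ?thesis .
  qed
  thus ?thesis unfolding invp_def meq_def by simp
qed

lemma perm_step:
  assumes iv: "ivt t m n B" and i0: "t \<le> i0" "i0 < m" and j0: "t \<le> j0" "j0 < n"
  shows "ivt t m n (mm m (pr (sw t i0)) (mm n B (pc (sw t j0)))) \<and>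
         mm m (pr (sw t i0)) (mm n B (pc (sw t j0))) t t = B i0 j0"
proof -
  have tm: "t < m" "t < n" using i0 j0 by auto
  have e: "mm m (pr (sw t i0)) (mm n B (pc (sw t j0))) i j = B (sw t i0 i) (sw t j0 j)" if "i < m" "j < n" for i j
    using that tm i0 j0 by (simp add: mm_pr mm_pc sw_lt)
  have fx: "sw a b i = i" if "i < t" "t \<le> a" "t \<le> b" for a b i using that unfolding sw_def by auto
  have im1sw: "im1 (sw a b i) (sw a b j) = im1 i j" for a b i j unfolding im1_def by (simp add: sw_inj)
  have "ivt t m n (mm m (pr (sw t i0)) (mm n B (pc (sw t j0))))"
    unfolding ivt_def
  proof (intro allI impI)
    fix i j assume ij: "i < m" "j < n" "i < t \<or> j < t"
    have lt: "sw t i0 i < m" "sw t j0 j < n" using ij tm i0 j0 by (simp_all add: sw_lt)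
    show "mm m (pr (sw t i0)) (mm n B (pc (sw t j0))) i j = im1 i j"
    proof (cases "i < t")
      case True
      have fi: "sw t i0 i = i" "sw t j0 i = i" using fx[OF True] i0 j0 by auto
      have "B (sw t i0 i) (sw t j0 j) = im1 (sw t i0 i) (sw t j0 j)"
        using iv lt True fi unfolding ivt_def by simp
      also have "\<dots> = im1 (sw t j0 i) (sw t j0 j)" using fi by simp
      also have "\<dots> = im1 i j" by (rule im1sw)
      finally show ?thesis using e ij by simp
    next
      case False
      hence jt: "j < t" using ij by simp
      have fj: "sw t j0 j = j" "sw t i0 j = j" using fx[OF jt] i0 j0 by auto
      have "B (sw t i0 i) (sw t j0 j) = im1 (sw t i0 i) (sw t j0 j)"
        using iv lt jt fj unfolding ivt_def by simp
      also have "\<dots> = im1 (sw t i0 i) (sw t i0 j)" using fj by simp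
      also have "\<dots> = im1 i j" by (rule im1sw)
      finally show ?thesis using e ij by simp
    qed
  qed
  moreover have "mm m (pr (sw t i0)) (mm n B (pc (sw t j0))) t t = B i0 j0"
    using e[OF tm] by (simp add: sw_def)
  ultimately show ?thesis by simp
qed

lemma sum_im1_l: "i < m \<Longrightarrow> (\<Sum>l<m. im1 i l * f l) = (f i :: 'a::comm_ring_1)"
  by (simp add: im1_def ifm1)
lemma sum_im1_r: "k < m \<Longrightarrow> (\<Sum>l<m. f l * im1 l k) = (f k :: 'a::comm_ring_1)"
  by (simp add: im1_def ifm2)
lemma sum_dt_l: "t < (m::nat) \<Longrightarrow> (\<Sum>l<m. (if l = t then a else 0) * f l) = (a * f t :: 'a::comm_ring_1)"
  by (simp add: ifm1)
lemma sum_dt_r: "t < (m::nat) \<Longrightarrow> (\<Sum>l<m. f l * (if l = t then a else 0)) = (f t * a :: 'a::comm_ring_1)"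
  by (simp add: ifm2)

lemma elim_step:
  fixes B :: "nat \<Rightarrow> nat \<Rightarrow> 'a::comm_ring_1"
  assumes iv: "ivt t m n B" and tm: "t < m" and tn: "t < n" and unit: "B t t dvd 1"
  shows "\<exists>L Li R Ri. invp m L Li \<and> invp n R Ri \<and> ivt (Suc t) m n (mm m L (mm n B R))"
proof -
  define c where "c = B t t"
  obtain u where cu: "c * u = 1" using unit unfolding c_def by (metis dvdE)
  define L where "L = (\<lambda>i k. if i = t then (if k = t then u else 0) else im1 i k - (if k = t then B i t * u else 0))"
  define Li where "Li = (\<lambda>i k. if i = t then (if k = t then c else 0) else im1 i k + (if k = t then B i t else 0))"
  define w where "w = (\<lambda>j. if j \<noteq> t then u * B t j else 0)"
  define R where "R = (\<lambda>l j. im1 l j - (if l = t then w j else 0))"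
  define Ri where "Ri = (\<lambda>l j. im1 l j + (if l = t then w j else 0))"
  have wt: "w t = 0" unfolding w_def by simp
  have LLi: "mm m L Li i k = im1 i k" if ik: "i < m" "k < m" for i k
  proof (cases "i = t")
    case True
    have "mm m L Li i k = (\<Sum>l<m. (if l = t then u else 0) * Li l k)"
      unfolding mm_def L_def using True by simp
    also have "\<dots> = u * Li t k" by (rule sum_dt_l[OF tm])
    finally show ?thesis using True cu by (simp add: Li_def im1_def mult.commute)
  next
    case False
    have "mm m L Li i k = (\<Sum>l<m. (im1 i l - (if l = t then B i t * u else 0)) * Li l k)"
      unfolding mm_def L_def using False by simp
    also have "\<dots> = (\<Sum>l<m. im1 i l * Li l k) - (\<Sum>l<m. (if l = t then B i t * u else 0) * Li l k)"
      by (simp add: left_diff_distrib sum_subtractf)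
    also have "\<dots> = Li i k - B i t * u * Li t k" using sum_im1_l[OF ik(1), of "\<lambda>l. Li l k"] sum_dt_l[OF tm, of _ "\<lambda>l. Li l k"] by simp
    also have "\<dots> = im1 i k"
    proof (cases "k = t")
      case True
      have "B i t * u * c = B i t" using cu by (simp add: mult.assoc mult.commute[of u c])
      thus ?thesis using True False unfolding Li_def im1_def by simp
    qed (use False in \<open>simp add: Li_def im1_def\<close>)
    finally show ?thesis .
  qed
  have LiL: "mm m Li L i k = im1 i k" if ik: "i < m" "k < m" for i k
  proof (cases "i = t")
    case True
    have "mm m Li L i k = (\<Sum>l<m. (if l = t then c else 0) * L l k)"
      unfolding mm_def Li_def using True by simp
    also have "\<dots> = c * L t k" by (rule sum_dt_l[OF tm])
    finally show ?thesis using True cu by (simp add: L_def im1_def)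
  next
    case False
    have "mm m Li L i k = (\<Sum>l<m. (im1 i l + (if l = t then B i t else 0)) * L l k)"
      unfolding mm_def Li_def using False by simp
    also have "\<dots> = (\<Sum>l<m. im1 i l * L l k) + (\<Sum>l<m. (if l = t then B i t else 0) * L l k)"
      by (simp add: distrib_right sum.distrib)
    also have "\<dots> = L i k + B i t * L t k" using sum_im1_l[OF ik(1), of "\<lambda>l. L l k"] sum_dt_l[OF tm, of _ "\<lambda>l. L l k"] by simp
    also have "\<dots> = im1 i k"
      using False unfolding L_def im1_def by (cases "k = t") (simp_all add: algebra_simps)
    finally show ?thesis .
  qed
  have wsum: "(\<Sum>l<n. w l * Ri l j) = w j" if "j < n" for j
  proof -
    have "(\<Sum>l<n. w l * Ri l j) = (\<Sum>l<n. w l * im1 l j) + (\<Sum>l<n. w l * (if l = t then w j else 0))"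
      unfolding Ri_def by (simp add: distrib_left sum.distrib)
    also have "\<dots> = w j" using sum_im1_r[OF that, of w] sum_dt_r[OF tn, of w "w j"] wt by simp
    finally show ?thesis .
  qed
  have wsum2: "(\<Sum>l<n. w l * R l j) = w j" if "j < n" for j
  proof -
    have "(\<Sum>l<n. w l * R l j) = (\<Sum>l<n. w l * im1 l j) - (\<Sum>l<n. w l * (if l = t then w j else 0))"
      unfolding R_def by (simp add: right_diff_distrib sum_subtractf)
    also have "\<dots> = w j" using sum_im1_r[OF that, of w] sum_dt_r[OF tn, of w "w j"] wt by simp
    finally show ?thesis .
  qed
  have RRi: "mm n R Ri l j = im1 l j" if lj: "l < n" "j < n" for l j
  proof (cases "l = t")
    case False
    have "mm n R Ri l j = (\<Sum>l'<n. im1 l l' * Ri l' j)" unfolding mm_def R_def using False by simp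
    also have "\<dots> = Ri l j" by (rule sum_im1_l[OF lj(1)])
    finally show ?thesis using False by (simp add: Ri_def)
  next
    case True
    have "mm n R Ri l j = (\<Sum>l'<n. (im1 t l' - w l') * Ri l' j)" unfolding mm_def R_def using True by simp
    also have "\<dots> = (\<Sum>l'<n. im1 t l' * Ri l' j) - (\<Sum>l'<n. w l' * Ri l' j)"
      by (simp add: left_diff_distrib sum_subtractf)
    also have "\<dots> = Ri t j - w j" using sum_im1_l[OF tn, of "\<lambda>l. Ri l j"] wsum[OF lj(2)] by simp
    finally show ?thesis using True by (simp add: Ri_def)
  qed
  have RiR: "mm n Ri R l j = im1 l j" if lj: "l < n" "j < n" for l j
  proof (cases "l = t")
    case False
    have "mm n Ri R l j = (\<Sum>l'<n. im1 l l' * R l' j)" unfolding mm_def Ri_def using False by simp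
    also have "\<dots> = R l j" by (rule sum_im1_l[OF lj(1)])
    finally show ?thesis using False by (simp add: R_def)
  next
    case True
    have "mm n Ri R l j = (\<Sum>l'<n. (im1 t l' + w l') * R l' j)" unfolding mm_def Ri_def using True by simp
    also have "\<dots> = (\<Sum>l'<n. im1 t l' * R l' j) + (\<Sum>l'<n. w l' * R l' j)"
      by (simp add: distrib_right sum.distrib)
    also have "\<dots> = R t j + w j" using sum_im1_l[OF tn, of "\<lambda>l. R l j"] wsum2[OF lj(2)] by simp
    finally show ?thesis using True by (simp add: R_def)
  qed
  have inv1: "invp m L Li" unfolding invp_def meq_def using LLi LiL by simp
  have inv2: "invp n R Ri" unfolding invp_def meq_def using RRi RiR by simp
  define X where "X = mm n B R"
  have X: "X i j = B i j - B i t * w j" if "j < n" for i j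
  proof -
    have "X i j = (\<Sum>l<n. B i l * im1 l j) - (\<Sum>l<n. B i l * (if l = t then w j else 0))"
      unfolding X_def mm_def R_def by (simp add: right_diff_distrib sum_subtractf)
    thus ?thesis using sum_im1_r[OF that, of "B i"] sum_dt_r[OF tn, of "B i" "w j"] by simp
  qed
  have Xt: "X t j = (if j = t then c else 0)" if "j < n" for j
  proof -
    have "B t t * (u * B t j) = B t j" using cu unfolding c_def by (metis mult.assoc mult_1)
    thus ?thesis using X[OF that, of t] unfolding w_def c_def by auto
  qed
  have B2: "mm m L X i j = (if i = t then u * X t j else X i j - B i t * u * X t j)" if "i < m" for i j
  proof (cases "i = t")
    case True
    have "mm m L X i j = (\<Sum>l<m. (if l = t then u else 0) * X l j)" unfolding mm_def L_def using True by simp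
    thus ?thesis using True sum_dt_l[OF tm, of u "\<lambda>l. X l j"] by simp
  next
    case False
    have "mm m L X i j = (\<Sum>l<m. im1 i l * X l j) - (\<Sum>l<m. (if l = t then B i t * u else 0) * X l j)"
      unfolding mm_def L_def using False by (simp add: left_diff_distrib sum_subtractf)
    thus ?thesis using False sum_im1_l[OF that, of "\<lambda>l. X l j"] sum_dt_l[OF tm, of "B i t * u" "\<lambda>l. X l j"] by simp
  qed
  have "ivt (Suc t) m n (mm m L X)"
    unfolding ivt_def
  proof (intro allI impI)
    fix i j assume ij: "i < m" "j < n" "i < Suc t \<or> j < Suc t"
    show "mm m L X i j = im1 i j"
    proof (cases "i = t")
      case True thus ?thesis using B2[OF ij(1)] Xt[OF ij(2)] cu by (simp add: im1_def mult.commute)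
    next
      case it: False
      show ?thesis
      proof (cases "j = t")
        case True
        have "mm m L X i j = X i t - B i t * u * X t t" using B2[OF ij(1)] it True by simp
        also have "\<dots> = B i t - B i t * (u * c)" using X[OF tn, of i] Xt[OF tn] wt by (simp add: mult.assoc)
        also have "\<dots> = 0" using cu by (simp add: mult.commute)
        finally show ?thesis using it True by (simp add: im1_def)
      next
        case jt: False
        have e: "mm m L X i j = B i j - B i t * w j" using B2[OF ij(1)] Xt[OF ij(2)] it jt X[OF ij(2)] by simp
        show ?thesis
        proof (cases "i < t")
          case True
          have "B i t = 0" using iv True tn ij(1) unfolding ivt_def by (simp add: im1_def)
          moreover have "B i j = im1 i j" using iv True ij unfolding ivt_def by simp
          ultimately show ?thesis using e by simp
        next
          case False
          hence "j < t" using ij it jt by auto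
          hence "B t j = 0" "B i j = im1 i j" using iv tm ij unfolding ivt_def by (auto simp: im1_def)
          thus ?thesis using e by (simp add: w_def)
        qed
      qed
    qed
  qed
  thus ?thesis using inv1 inv2 unfolding X_def by blast
qed

definition nfq :: "nat \<Rightarrow> nat \<Rightarrow> nat \<Rightarrow> (nat \<Rightarrow> nat \<Rightarrow> 'a::comm_ring_1) \<Rightarrow> bool" where
  "nfq a m n Q \<longleftrightarrow> (\<forall>i<m. \<forall>j<n. (i < a \<or> j < a \<longrightarrow> Q i j = im1 i j) \<and> (a \<le> i \<and> a \<le> j \<longrightarrow> Q i j \<in> maxideal))"

definition nf :: "(nat \<Rightarrow> nat \<Rightarrow> 'a::comm_ring_1) \<Rightarrow> nat \<Rightarrow> nat \<Rightarrow> (nat \<Rightarrow> nat \<Rightarrow> 'a) \<Rightarrow> (nat \<Rightarrow> nat \<Rightarrow> 'a)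
    \<Rightarrow> (nat \<Rightarrow> nat \<Rightarrow> 'a) \<Rightarrow> (nat \<Rightarrow> nat \<Rightarrow> 'a) \<Rightarrow> nat \<Rightarrow> bool" where
  "nf D m n U Ui V Vi a \<longleftrightarrow> invp m U Ui \<and> invp n V Vi \<and> a \<le> m \<and> a \<le> n \<and> nfq a m n (mm m U (mm n D V))"

lemma nf_loop:
  fixes D :: "nat \<Rightarrow> nat \<Rightarrow> 'a::comm_ring_1"
  shows "\<forall>t U Ui V Vi. m - t = k \<longrightarrow> t \<le> m \<longrightarrow> t \<le> n \<longrightarrow> invp m U Ui \<longrightarrow> invp n V Vi \<longrightarrow>
          ivt t m n (mm m U (mm n D V)) \<longrightarrow> (\<exists>U Ui V Vi a. nf D m n U Ui V Vi a)"
proof (induction k)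
  case 0
  show ?case
  proof (intro allI impI)
    fix t U Ui V Vi assume h: "m - t = 0" "t \<le> m" "t \<le> n" "invp m U Ui" "invp n V Vi"
      "ivt t m n (mm m U (mm n D V))"
    have "t = m" using h by simp
    hence "nf D m n U Ui V Vi t" using h unfolding nf_def nfq_def ivt_def by auto
    thus "\<exists>U Ui V Vi a. nf D m n U Ui V Vi a" by blast
  qed
next
  case (Suc k)
  show ?case
  proof (intro allI impI)
    fix t U Ui V Vi assume h: "m - t = Suc k" "t \<le> m" "t \<le> n" "invp m U Ui" "invp n V Vi"
      "ivt t m n (mm m U (mm n D V))"
    define B where "B = mm m U (mm n D V)"
    show "\<exists>U Ui V Vi a. nf D m n U Ui V Vi a"
    proof (cases "\<exists>i0 j0. t \<le> i0 \<and> i0 < m \<and> t \<le> j0 \<and> j0 < n \<and> B i0 j0 \<notin> maxideal")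
      case False
      hence "nfq t m n B" using h unfolding nfq_def ivt_def B_def by (meson not_less)
      hence "nf D m n U Ui V Vi t" using h unfolding nf_def B_def by auto
      thus ?thesis by blast
    next
      case True
      then obtain i0 j0 where ij: "t \<le> i0" "i0 < m" "t \<le> j0" "j0 < n" "B i0 j0 \<notin> maxideal" by blast
      have tm: "t < m" "t < n" using ij by auto
      define P where "P = (pr (sw t i0) :: nat \<Rightarrow> nat \<Rightarrow> 'a)"
      define Q where "Q = (pc (sw t j0) :: nat \<Rightarrow> nat \<Rightarrow> 'a)"
      have ivB: "ivt t m n B" using h unfolding B_def by simp
      have ps: "ivt t m n (mm m P (mm n B Q))" "mm m P (mm n B Q) t t = B i0 j0"
        using perm_step[OF ivB ij(1-4)] unfolding P_def Q_def by auto
      have unit: "mm m P (mm n B Q) t t dvd 1" using ps(2) ij(5) by (simp add: maxideal_def)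
      obtain L Li R Ri where lr: "invp m L Li" "invp n R Ri"
        "ivt (Suc t) m n (mm m L (mm n (mm m P (mm n B Q)) R))"
        using elim_step[OF ps(1) tm unit] by blast
      have iP: "invp m P P" unfolding P_def by (rule invp_pr) (use ij tm in auto)
      have iQ: "invp n Q Q" unfolding Q_def by (rule invp_pc) (use ij tm in auto)
      have invU: "invp m (mm m L (mm m P U)) (mm m (mm m Ui P) Li)"
        by (rule invp_mult[OF lr(1) invp_mult[OF iP h(4)]])
      have invV: "invp n (mm n (mm n V Q) R) (mm n Ri (mm n Q Vi))"
        by (rule invp_mult[OF invp_mult[OF h(5) iQ] lr(2)])
      have eq: "mm m (mm m L (mm m P U)) (mm n D (mm n (mm n V Q) R)) = mm m L (mm n (mm m P (mm n B Q)) R)"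
        unfolding B_def by (simp add: mm_assoc)
      show ?thesis
        using Suc.IH[rule_format, of "Suc t" "mm m L (mm m P U)" "mm m (mm m Ui P) Li"
            "mm n (mm n V Q) R" "mm n Ri (mm n Q Vi)"] h tm invU invV lr(3) eq by simp
    qed
  qed
qed

lemma nf_exists: "\<exists>U Ui V Vi a. nf (D :: nat \<Rightarrow> nat \<Rightarrow> 'a::comm_ring_1) m n U Ui V Vi a"
  by (rule nf_loop[of m m n D, rule_format, of 0 im1 im1 im1 im1]) (simp_all add: invp_im1 ivt_def)

lemma nf_mat:
  assumes "nf D m n U Ui V Vi a"
  shows "meq m n (mm m Ui (mm n (mm m U (mm n D V)) Vi)) D"
  unfolding meq_def
proof (intro allI impI)
  fix i j assume ij: "i < m" "j < n"
  have iu: "invp m U Ui" and iv: "invp n V Vi" using assms by (auto simp: nf_def)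
  have "mm m Ui (mm n (mm m U (mm n D V)) Vi) i j = mm m (mm m Ui U) (mm n D (mm n V Vi)) i j"
    by (simp add: mm_assoc)
  also have "\<dots> = mm m im1 (mm n D (mm n V Vi)) i j"
    by (rule mm_cong_l) (use iu ij in \<open>auto simp: invp_def meq_def\<close>)
  also have "\<dots> = mm n D (mm n V Vi) i j" using ij by (simp add: mm_im1_left)
  also have "\<dots> = mm n D im1 i j"
    by (rule mm_cong_r) (use iv ij in \<open>auto simp: invp_def meq_def\<close>)
  also have "\<dots> = D i j" using ij by (simp add: mm_im1_right)
  finally show "mm m Ui (mm n (mm m U (mm n D V)) Vi) i j = D i j" .
qed

lemma nf_decomp:
  assumes nf: "nf D m n U Ui V Vi a" and m: "module act"
  shows "mv act D m n x = mv act Ui m m (mv act (mm m U (mm n D V)) m n (mv act Vi n n x))"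
proof -
  have "mv act D m n x = mv act (mm m Ui (mm n (mm m U (mm n D V)) Vi)) m n x"
    by (rule mv_meq[OF nf_mat[OF nf], symmetric])
  also have "\<dots> = mv act Ui m m (mv act (mm m U (mm n D V)) m n (mv act Vi n n x))"
    by (simp add: mv_comp[OF m])
  finally show ?thesis .
qed

definition good :: "('a::comm_ring_1 \<Rightarrow> 'v::ab_group_add \<Rightarrow> 'v) \<Rightarrow> ('a \<Rightarrow> 'v \<Rightarrow> 'v) \<Rightarrow> bool" where
  "good act sc \<longleftrightarrow> module act \<and> module sc \<and> (\<forall>a c v. act a (sc c v) = sc c (act a v)) \<and>
     (\<forall>a\<in>maxideal. \<forall>v. act a v = 0)"

lemma nf_Q:
  assumes nf: "nf D m n U Ui V Vi a" and g: "good act sc" and y: "y \<in> vecs n"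
  shows "mv act (mm m U (mm n D V)) m n y = (\<lambda>i. if i < a then y i else 0)"
proof -
  have m: "module act" using g by (simp add: good_def)
  interpret module act by (rule m)
  define Q where "Q = mm m U (mm n D V)"
  have q: "nfq a m n Q" and am: "a \<le> m" "a \<le> n" using nf unfolding nf_def Q_def by auto
  have "(\<Sum>k<n. act (Q i k) (y k)) = (if i < a then y i else 0)" if i: "i < m" for i
  proof (cases "i < a")
    case True
    have "(\<Sum>k<n. act (Q i k) (y k)) = (\<Sum>k<n. if i = k then y k else 0)"
      by (rule sum.cong) (use q i True in \<open>auto simp: nfq_def im1_def\<close>)
    thus ?thesis using True am by simp
  next
    case False
    have "(\<Sum>k<n. act (Q i k) (y k)) = (\<Sum>k<n. 0)"
    proof (rule sum.cong)
      fix k assume k: "k \<in> {..<n}"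
      show "act (Q i k) (y k) = 0"
      proof (cases "k < a")
        case True
        hence "Q i k = 0" using q i k False unfolding nfq_def im1_def by auto
        thus ?thesis by simp
      next
        case kF: False
        hence "Q i k \<in> maxideal" using q i k False unfolding nfq_def by auto
        thus ?thesis using g unfolding good_def by auto
      qed
    qed simp
    thus ?thesis using False by simp
  qed
  thus ?thesis unfolding mv_def Q_def[symmetric] using am by (auto simp: fun_eq_iff)
qed

lemma invp_surj:
  fixes act :: "'a::comm_ring_1 \<Rightarrow> 'v::ab_group_add \<Rightarrow> 'v"
  assumes m: "module act" and inv: "invp n V Vi"
  shows "mv act Vi n n ` vecs n = vecs n"
proof
  show "mv act Vi n n ` vecs n \<subseteq> vecs n" using mv_vecs by blast
  show "vecs n \<subseteq> mv act Vi n n ` vecs n"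
  proof
    fix x :: "nat \<Rightarrow> 'v" assume x: "x \<in> vecs n"
    have "x = mv act Vi n n (mv act V n n x)" using invp_mv[OF m invp_sym[OF inv] x] by simp
    thus "x \<in> mv act Vi n n ` vecs n" using mv_vecs by blast
  qed
qed

lemma nf_image:
  assumes nf: "nf D m n U Ui V Vi a" and g: "good act sc"
  shows "mv act D m n ` vecs n = mv act Ui m m ` S {..<a}"
proof -
  have m: "module act" using g by (simp add: good_def)
  have am: "a \<le> m" "a \<le> n" and iv: "invp n V Vi" using nf unfolding nf_def by auto
  have qi: "mv act (mm m U (mm n D V)) m n ` vecs n = S {..<a}"
  proof
    show "mv act (mm m U (mm n D V)) m n ` vecs n \<subseteq> S {..<a}"
      using nf_Q[OF nf g] unfolding S_def by auto
    show "S {..<a} \<subseteq> mv act (mm m U (mm n D V)) m n ` vecs n"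
    proof
      fix z :: "nat \<Rightarrow> 'b" assume z: "z \<in> S {..<a}"
      hence zv: "z \<in> vecs n" using am unfolding S_def vecs_def by auto
      have "mv act (mm m U (mm n D V)) m n z = z"
        using nf_Q[OF nf g zv] z unfolding S_def by (auto simp: fun_eq_iff)
      thus "z \<in> mv act (mm m U (mm n D V)) m n ` vecs n" using zv by (metis image_eqI)
    qed
  qed
  have "mv act D m n ` vecs n = mv act Ui m m ` (mv act (mm m U (mm n D V)) m n ` (mv act Vi n n ` vecs n))"
    using nf_decomp[OF nf m] by (simp add: image_image)
  also have "\<dots> = mv act Ui m m ` S {..<a}" using invp_surj[OF m iv] qi by simp
  finally show ?thesis .
qed

lemma good_lin:
  assumes g: "good act sc"
  shows "\<And>x y. mv act D m n (x + y) = mv act D m n x + mv act D m n y"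
    and "\<And>c x. mv act D m n (vsc sc c x) = vsc sc c (mv act D m n x)"
  using g unfolding good_def by (auto simp: mv_add mv_vsc)

lemma inj_len:
  fixes act :: "'a::comm_ring_1 \<Rightarrow> 'v::ab_group_add \<Rightarrow> 'v"
  assumes g: "good act sc" and inv: "invp m U Ui" and sX: "is_submod 0 (+) (vsc sc) X"
    and Xv: "X \<subseteq> vecs m"
  shows "len 0 (+) (vsc sc) {0} (mv act Ui m m ` X) = len 0 (+) (vsc sc) {0} X"
proof -
  have m: "module act" and ms: "module sc" using g by (auto simp: good_def)
  have "len 0 (+) (vsc sc) {0} X = len 0 (+) (vsc sc) (mv act Ui m m ` {0}) (mv act Ui m m ` X)"
  proof (rule len_map[OF module_vsc[OF ms] module_vsc[OF ms]])
    show "mv act Ui m m (x + y) = mv act Ui m m x + mv act Ui m m y" for x y by (rule good_lin(1)[OF g])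
    show "mv act Ui m m (vsc sc c x) = vsc sc c (mv act Ui m m x)" for c x by (rule good_lin(2)[OF g])
    show "is_submod 0 (+) (vsc sc) {0}" by (rule sm_zero[OF module_vsc[OF ms]])
    show "is_submod 0 (+) (vsc sc) X" by (rule sX)
    show "{0} \<subseteq> X" using sm_0[OF sX] by auto
    fix x assume "x \<in> X" "mv act Ui m m x = 0"
    hence "x = mv act U m m (mv act Ui m m x)" using invp_mv[OF m inv, of x] Xv by auto
    also have "\<dots> = mv act U m m 0" using \<open>mv act Ui m m x = 0\<close> by simp
    also have "\<dots> = 0" using mv_zero[OF m] by simp
    finally show "x \<in> {0}" by simp
  qed
  moreover have "mv act Ui m m ` {0} = {0}" using mv_zero[OF m] by simp
  ultimately show ?thesis by simp
qed

lemma nf_len: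
  fixes act :: "'a::comm_ring_1 \<Rightarrow> 'v::ab_group_add \<Rightarrow> 'v"
  assumes nf: "nf D m n U Ui V Vi a" and g: "good act sc"
  shows "len 0 (+) (vsc sc) {0} (mv act D m n ` vecs n) = of_nat a * len 0 (+) sc {0} UNIV"
proof -
  have ms: "module sc" using g by (auto simp: good_def)
  have am: "a \<le> m" and iu: "invp m U Ui" using nf unfolding nf_def by auto
  have "len 0 (+) (vsc sc) {0} (mv act D m n ` vecs n) = len 0 (+) (vsc sc) {0} (mv act Ui m m ` S {..<a})"
    using nf_image[OF nf g] by simp
  also have "\<dots> = len 0 (+) (vsc sc) {0} (S {..<a})"
    by (rule inj_len[OF g iu sm_S[OF ms]]) (use am in \<open>auto simp: S_def vecs_def\<close>)
  also have "\<dots> = of_nat a * len 0 (+) sc {0} UNIV" using len_S[OF ms, of "{..<a}"] by simp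
  finally show ?thesis .
qed

lemma notmax_iff: "x \<notin> maxideal \<longleftrightarrow> x dvd 1" unfolding maxideal_def by simp

lemma maxideal_mult:
  assumes loc: "local_ring TYPE('a::comm_ring_1)" and a: "(a::'a) \<in> maxideal"
  shows "b * a \<in> maxideal" "a * b \<in> maxideal"
proof -
  have "is_submod 0 (+) (*) (maxideal :: 'a set)" using loc unfolding local_ring_def is_ideal_def by simp
  thus "b * a \<in> maxideal" using a by (rule sm_scale)
  thus "a * b \<in> maxideal" by (simp add: mult.commute)
qed

lemma hyperplane:
  fixes sc :: "'a::comm_ring_1 \<Rightarrow> 'v::ab_group_add \<Rightarrow> 'v"
  assumes m: "module sc"
    and sA: "is_submod 0 (+) sc A" and sC: "is_submod 0 (+) sc C" and AC: "A \<subseteq> C" and ne: "A \<noteq> C"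
    and kill: "\<forall>a\<in>maxideal. \<forall>x\<in>C. sc a x \<in> A"
  shows "\<exists>D. is_submod 0 (+) sc D \<and> A \<subseteq> D \<and> D \<subset> C \<and> len 0 (+) sc D C \<le> 1"
proof -
  interpret module sc by (rule m)
  obtain x where x: "x \<in> C" "x \<notin> A" using AC ne by auto
  define F where "F = {D. is_submod 0 (+) sc D \<and> A \<subseteq> D \<and> D \<subseteq> C \<and> x \<notin> D}"
  have "A \<in> F" using sA x AC unfolding F_def by simp
  hence Fne: "F \<noteq> {}" by blast
  have Fch: "\<Union>Ch \<in> F" if ch: "Ch \<noteq> {}" "subset.chain F Ch" for Ch
  proof -
    have sub: "Ch \<subseteq> F" and cmp: "\<forall>X\<in>Ch. \<forall>Y\<in>Ch. X \<subseteq> Y \<or> Y \<subseteq> X"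
      using ch(2) unfolding subset_chain_def by auto
    obtain D0 where D0: "D0 \<in> Ch" using ch(1) by auto
    have "is_submod 0 (+) sc (\<Union>Ch)"
      unfolding is_submod_def
    proof (intro conjI ballI allI)
      have "is_submod 0 (+) sc D0" using D0 sub unfolding F_def by blast
      thus "0 \<in> \<Union>Ch" using D0 sm_0 by blast
    next
      fix u v assume "u \<in> \<Union>Ch" "v \<in> \<Union>Ch"
      then obtain X Y where XY: "X \<in> Ch" "Y \<in> Ch" "u \<in> X" "v \<in> Y" by auto
      have sX: "is_submod 0 (+) sc X" and sY: "is_submod 0 (+) sc Y" using XY sub unfolding F_def by auto
      show "u + v \<in> \<Union>Ch"
      proof (cases "X \<subseteq> Y")
        case True
        hence "u + v \<in> Y" using XY sm_add[OF sY, of u v] by auto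
        thus ?thesis using XY by auto
      next
        case False hence "Y \<subseteq> X" using cmp XY by blast
        hence "u + v \<in> X" using XY sm_add[OF sX, of u v] by auto
        thus ?thesis using XY by auto
      qed
    next
      fix c u assume "u \<in> \<Union>Ch"
      then obtain X where X: "X \<in> Ch" "u \<in> X" by auto
      have sX: "is_submod 0 (+) sc X" using X sub unfolding F_def by auto
      have "sc c u \<in> X" using sm_scale[OF sX X(2)] by simp
      thus "sc c u \<in> \<Union>Ch" using X by auto
    qed
    note sU = this
    have "A \<subseteq> D0" using D0 sub unfolding F_def by auto
    hence AU: "A \<subseteq> \<Union>Ch" using D0 by auto
    have UC: "\<Union>Ch \<subseteq> C" and xU: "x \<notin> \<Union>Ch" using sub unfolding F_def by auto
    show ?thesis unfolding F_def using sU AU UC xU by simp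
  qed
  have "\<exists>M\<in>F. \<forall>X\<in>F. M \<subseteq> X \<longrightarrow> X = M"
    by (rule subset_Zorn_nonempty[OF Fne Fch])
  then obtain D where D: "D \<in> F" and maxD: "\<forall>X\<in>F. D \<subseteq> X \<longrightarrow> X = D" by blast
  have sD: "is_submod 0 (+) sc D" and AD: "A \<subseteq> D" and DC: "D \<subseteq> C" and xD: "x \<notin> D"
    using D unfolding F_def by auto
  have xE: "x \<in> E" if "is_submod 0 (+) sc E" "D \<subset> E" "E \<subseteq> C" for E
  proof (rule ccontr)
    assume "x \<notin> E"
    hence "E \<in> F" using that AD unfolding F_def by auto
    hence "E = D" using maxD that(2) by auto
    thus False using that(2) by simp
  qed
  have full: "E = C" if sE: "is_submod 0 (+) sc E" and DE: "D \<subset> E" and EC: "E \<subseteq> C" for E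
  proof
    show "E \<subseteq> C" by (rule EC)
    show "C \<subseteq> E"
    proof
      fix y assume y: "y \<in> C"
      show "y \<in> E"
      proof (cases "y \<in> D")
        case True thus ?thesis using DE by auto
      next
        case False
        define D' where "D' = {d + sc r y | d r. d \<in> D}"
        have sD': "is_submod 0 (+) sc D'"
          unfolding is_submod_def D'_def
        proof (intro conjI ballI allI)
          show "0 \<in> {d + sc r y |d r. d \<in> D}" using sm_0[OF sD]
            by (intro CollectI exI[of _ 0] exI[of _ "0::'a"]) simp
        next
          fix u v assume "u \<in> {d + sc r y |d r. d \<in> D}" "v \<in> {d + sc r y |d r. d \<in> D}"
          then obtain d r d' r' where "u = d + sc r y" "v = d' + sc r' y" "d \<in> D" "d' \<in> D" by auto
          thus "u + v \<in> {d + sc r y |d r. d \<in> D}" using sm_add[OF sD]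
            by (intro CollectI exI[of _ "d + d'"] exI[of _ "r + r'"]) (simp add: algebra_simps)
        next
          fix c u assume "u \<in> {d + sc r y |d r. d \<in> D}"
          then obtain d r where "u = d + sc r y" "d \<in> D" by auto
          thus "sc c u \<in> {d + sc r y |d r. d \<in> D}" using sm_scale[OF sD]
            by (intro CollectI exI[of _ "sc c d"] exI[of _ "c * r"]) (simp add: algebra_simps)
        qed
        have "D \<subseteq> D'"
        proof
          fix d assume "d \<in> D"
          thus "d \<in> D'" unfolding D'_def by (intro CollectI exI[of _ d] exI[of _ "0::'a"]) simp
        qed
        moreover have "y \<in> D'" unfolding D'_def using sm_0[OF sD]
          by (intro CollectI exI[of _ 0] exI[of _ "1::'a"]) simp
        ultimately have DD': "D \<subset> D'" using False by auto
        have D'C: "D' \<subseteq> C"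
        proof
          fix z assume "z \<in> D'"
          then obtain d r where "z = d + sc r y" "d \<in> D" unfolding D'_def by auto
          thus "z \<in> C" using DC y sm_add[OF sC, of d "sc r y"] sm_scale[OF sC y, of r] by auto
        qed
        have "x \<in> D'" by (rule xE[OF sD' DD' D'C])
        then obtain d r where dr: "x = d + sc r y" "d \<in> D" unfolding D'_def by auto
        have "r \<notin> maxideal"
        proof
          assume "r \<in> maxideal"
          hence "sc r y \<in> D" using kill y AD by auto
          hence "x \<in> D" using dr sm_add[OF sD] by auto
          thus False using xD by simp
        qed
        then obtain s where rs: "1 = r * s" unfolding notmax_iff by (metis dvdE)
        have "sc s (x - d) = y" using dr rs by (simp add: mult.commute)
        moreover have "x - d \<in> E" using sm_diff[OF m sE, of x d] xE[OF sE DE EC] dr(2) DE by auto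
        hence "sc s (x - d) \<in> E" by (rule sm_scale[OF sE])
        ultimately show ?thesis by simp
      qed
    qed
  qed
  have "len 0 (+) sc D C \<le> 1"
  proof (rule len_le)
    fix n Ch assume c: "chn sc D C n Ch"
    show "enat n \<le> 1"
    proof (rule ccontr)
      assume "\<not> enat n \<le> 1"
      hence n2: "2 \<le> n" by (simp add: one_enat_def)
      have st: "\<forall>i<n. Ch i \<subset> Ch (Suc i)" using c by (simp add: chn_def)
      have "Ch 0 \<subset> Ch 1" using st[rule_format, of 0] n2 by simp
      moreover have "Ch 1 \<subset> Ch 2" using st[rule_format, of 1] n2 by (simp add: numeral_2_eq_2)
      moreover have "Ch 2 \<subseteq> C" using chn_mono[OF c, of 2 n] n2 c unfolding chn_def by auto
      moreover have "is_submod 0 (+) sc (Ch 1)" using c n2 unfolding chn_def by auto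
      moreover have "Ch 0 = D" using c unfolding chn_def by auto
      ultimately have "Ch 1 = C" using full by auto
      thus False using \<open>Ch 1 \<subset> Ch 2\<close> \<open>Ch 2 \<subseteq> C\<close> by auto
    qed
  qed
  moreover have "D \<subset> C" using DC x xD by auto
  ultimately show ?thesis using sD AD by blast
qed

lemma dcc_fin:
  fixes A B :: "'a::comm_ring_1 set"
  assumes art: "artinian TYPE('a)"
    and sA: "is_submod 0 (+) (*) A" and sB: "is_submod 0 (+) (*) B" and AB: "A \<subseteq> B"
    and kill: "\<forall>a\<in>maxideal. \<forall>x\<in>B. a * x \<in> A"
  shows "len 0 (+) (*) A B \<noteq> \<infinity>"
proof
  assume inf: "len 0 (+) (*) A B = \<infinity>"
  define P where "P C \<longleftrightarrow> is_submod 0 (+) (*) C \<and> A \<subseteq> C \<and> C \<subseteq> B \<and> len 0 (+) (*) A C = \<infinity>" for C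
  have step: "\<exists>D. P D \<and> D \<subset> C" if PC: "P C" for C
  proof -
    have sC: "is_submod 0 (+) (*) C" and AC: "A \<subseteq> C" and CB: "C \<subseteq> B" and li: "len 0 (+) (*) A C = \<infinity>"
      using PC unfolding P_def by auto
    have "A \<noteq> C" using li len_refl[of "(*)" A] by auto
    moreover have "\<forall>a\<in>maxideal. \<forall>x\<in>C. a * x \<in> A" using kill CB by auto
    ultimately obtain D where D: "is_submod 0 (+) (*) D" "A \<subseteq> D" "D \<subset> C" "len 0 (+) (*) D C \<le> 1"
      using hyperplane[OF module_mult sA sC AC] by blast
    have "len 0 (+) (*) A C = len 0 (+) (*) A D + len 0 (+) (*) D C"
      by (rule len_add[OF module_mult sA D(1) sC D(2)]) (use D(3) in auto)
    hence "len 0 (+) (*) A D = \<infinity>" using li D(4)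
      by (cases "len 0 (+) (*) A D"; cases "len 0 (+) (*) D C") (auto simp: one_enat_def)
    thus ?thesis using D CB unfolding P_def by (intro exI[of _ D]) auto
  qed
  define nx where "nx C = (SOME D. P D \<and> D \<subset> C)" for C
  define f where "f n = (nx ^^ n) B" for n
  have Pf: "P (f n) \<and> f (Suc n) \<subset> f n" for n
  proof (induction n)
    case 0
    have "P B" unfolding P_def using sB AB inf by auto
    thus ?case using someI_ex[OF step[of B]] unfolding f_def nx_def by simp
  next
    case (Suc n)
    hence "P (f (Suc n))" using someI_ex[OF step[of "f n"]] unfolding f_def nx_def by simp
    thus ?case using someI_ex[OF step[of "f (Suc n)"]] unfolding f_def nx_def by simp
  qed
  have "\<forall>n. is_ideal (f n) \<and> f (Suc n) \<subset> f n"
    using Pf unfolding P_def is_ideal_def by simp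
  hence "\<exists>I :: nat \<Rightarrow> 'a set. \<forall>n. is_ideal (I n) \<and> I (Suc n) \<subset> I n" by (rule exI[of _ f])
  thus False using art unfolding artinian_def by blast
qed

definition Jf :: "nat \<Rightarrow> 'a::comm_ring_1 set" where
  "Jf i = {x. \<forall>y::nat \<Rightarrow> 'a. (\<forall>l<i. y l \<in> maxideal) \<longrightarrow> x * (\<Prod>l<i. y l) = 0}"

lemma Jf_0: "Jf 0 = {0}" unfolding Jf_def by auto

lemma Jf_sub: "is_submod 0 (+) (*) (Jf i)"
  unfolding is_submod_def Jf_def by (auto simp: distrib_right mult.assoc)

lemma Jf_mono: "(Jf i :: 'a::comm_ring_1 set) \<subseteq> Jf (Suc i)"
proof
  fix x :: 'a assume x: "x \<in> Jf i"
  show "x \<in> Jf (Suc i)" unfolding Jf_def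
  proof (intro CollectI allI impI)
    fix y :: "nat \<Rightarrow> 'a" assume "\<forall>l<Suc i. y l \<in> maxideal"
    hence "x * (\<Prod>l<i. y l) = 0" using x unfolding Jf_def by auto
    thus "x * (\<Prod>l<Suc i. y l) = 0" by (simp add: mult.assoc[symmetric])
  qed
qed

lemma Jf_kill:
  fixes a x :: "'a::comm_ring_1"
  assumes a: "a \<in> maxideal" and x: "x \<in> Jf (Suc i)"
  shows "a * x \<in> Jf i"
  unfolding Jf_def
proof (intro CollectI allI impI)
  fix y :: "nat \<Rightarrow> 'a" assume y: "\<forall>l<i. y l \<in> maxideal"
  define y' where "y' = y(i := a)"
  have "\<forall>l<Suc i. y' l \<in> maxideal" using y a unfolding y'_def by (auto simp: less_Suc_eq)
  hence "x * (\<Prod>l<Suc i. y' l) = 0" using x unfolding Jf_def by blast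
  moreover have "(\<Prod>l<Suc i. y' l) = (\<Prod>l<i. y l) * a"
    unfolding y'_def by (simp add: prod.lessThan_Suc)
  ultimately show "a * x * (\<Prod>l<i. y l) = 0" by (simp add: algebra_simps)
qed

lemma R_fin:
  assumes art: "artinian TYPE('a::comm_ring_1)"
    and hyp: "\<forall>x :: nat \<Rightarrow> 'a. (\<forall>i<p. x i \<in> maxideal) \<longrightarrow> (\<Prod>i<p. x i) = 0"
  shows "len 0 (+) ((*) :: 'a \<Rightarrow> 'a \<Rightarrow> 'a) {0} UNIV \<noteq> \<infinity>"
proof -
  have "len 0 (+) ((*) :: 'a \<Rightarrow> 'a \<Rightarrow> 'a) {0} (Jf i) \<noteq> \<infinity>" for i
  proof (induction i)
    case 0 thus ?case by (simp add: Jf_0 len_refl)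
  next
    case (Suc i)
    have "len 0 (+) ((*) :: 'a \<Rightarrow> 'a \<Rightarrow> 'a) {0} (Jf (Suc i)) = len 0 (+) ((*) :: 'a \<Rightarrow> 'a \<Rightarrow> 'a) {0} (Jf i) + len 0 (+) ((*) :: 'a \<Rightarrow> 'a \<Rightarrow> 'a) (Jf i) (Jf (Suc i))"
    proof (rule len_add[OF module_mult sm_zero[OF module_mult] Jf_sub[of i] Jf_sub[of "Suc i"]])
      show "{0} \<subseteq> (Jf i :: 'a set)" using sm_0[OF Jf_sub[of i]] by auto
      show "(Jf i :: 'a set) \<subseteq> Jf (Suc i)" by (rule Jf_mono)
    qed
    moreover have "len 0 (+) ((*) :: 'a \<Rightarrow> 'a \<Rightarrow> 'a) (Jf i) (Jf (Suc i)) \<noteq> \<infinity>"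
      by (rule dcc_fin[OF art Jf_sub Jf_sub Jf_mono]) (auto intro: Jf_kill)
    ultimately show ?case using Suc.IH by (simp add: plus_eq_infty_iff_enat)
  qed
  moreover have "Jf p = (UNIV :: 'a set)" using hyp unfolding Jf_def by auto
  ultimately show ?thesis by (metis (no_types))
qed

section \<open>Residue field\<close>

lemma k_good:
  fixes sck :: "'a::comm_ring_1 \<Rightarrow> 'k::ab_group_add \<Rightarrow> 'k" and \<pi> :: "'a \<Rightarrow> 'k"
  assumes mk: "module sck" and pim: "\<forall>a x. \<pi> (a * x) = sck a (\<pi> x)" and surj: "surj \<pi>"
    and ker: "{x. \<pi> x = 0} = maxideal" and loc: "local_ring TYPE('a)"
  shows "good sck sck"
  unfolding good_def
proof (intro conjI allI ballI)
  show "module sck" by (rule mk)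
  show "module sck" by (rule mk)
  show "sck a (sck c v) = sck c (sck a v)" for a c v
    by (simp add: module.scale_scale[OF mk] mult.commute)
  fix a :: 'a and v :: 'k assume a: "a \<in> maxideal"
  obtain x where "v = \<pi> x" using surj by (metis surjD)
  hence "sck a v = \<pi> (a * x)" using pim by simp
  moreover have "a * x \<in> maxideal" using maxideal_mult[OF loc a] by simp
  ultimately show "sck a v = 0" using ker by auto
qed

lemma k_len:
  fixes sck :: "'a::comm_ring_1 \<Rightarrow> 'k::ab_group_add \<Rightarrow> 'k" and \<pi> :: "'a \<Rightarrow> 'k"
  assumes mk: "module sck" and pim: "\<forall>a x. \<pi> (a * x) = sck a (\<pi> x)" and surj: "surj \<pi>"
    and ker: "{x. \<pi> x = 0} = maxideal" and loc: "local_ring TYPE('a)"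
  shows "len 0 (+) sck {0} UNIV = 1"
proof -
  have full: "S = UNIV" if sS: "is_submod 0 (+) sck S" and ne: "S \<noteq> {0}" for S
  proof -
    obtain z where z: "z \<in> S" "z \<noteq> 0" using ne sm_0[OF sS] by auto
    obtain x where zx: "z = \<pi> x" using surj by (metis surjD)
    have "x \<notin> maxideal" using z zx ker by auto
    then obtain s where xs: "1 = x * s" unfolding notmax_iff by (metis dvdE)
    have "w \<in> S" for w
    proof -
      obtain y where wy: "w = \<pi> y" using surj by (metis surjD)
      have "w = \<pi> ((y * s) * x)" using wy xs by (simp add: mult.assoc mult.commute[of s x])
      also have "\<dots> = sck (y * s) z" using pim zx by simp
      finally show ?thesis using sm_scale[OF sS z(1)] by simp
    qed
    thus ?thesis by auto
  qed
  have ne: "{0} \<noteq> (UNIV :: 'k set)"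
  proof
    assume "{0} = (UNIV :: 'k set)"
    hence "\<pi> 1 = 0" by auto
    hence "(1::'a) \<in> maxideal" using ker by auto
    thus False unfolding maxideal_def by simp
  qed
  have "len 0 (+) sck {0} UNIV \<le> 1"
  proof (rule len_le)
    fix n Ch assume c: "chn sck {0} UNIV n Ch"
    show "enat n \<le> 1"
    proof (rule ccontr)
      assume "\<not> enat n \<le> 1"
      hence n2: "2 \<le> n" by (simp add: one_enat_def)
      have st: "\<forall>i<n. Ch i \<subset> Ch (Suc i)" using c by (simp add: chn_def)
      have "Ch 0 \<subset> Ch 1" using st[rule_format, of 0] n2 by simp
      moreover have s12: "Ch 1 \<subset> Ch 2" using st[rule_format, of 1] n2 by (simp add: numeral_2_eq_2)
      moreover have "is_submod 0 (+) sck (Ch 1)" using c n2 unfolding chn_def by auto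
      moreover have "Ch 0 = {0}" using c unfolding chn_def by auto
      ultimately have "Ch 1 = UNIV" using full by auto
      thus False using s12 by auto
    qed
  qed
  moreover have "1 \<le> len 0 (+) sck {0} UNIV"
    by (rule len_pos[OF sm_zero[OF mk] sm_UNIV]) (use ne in auto)
  ultimately show ?thesis by simp
qed

section \<open>Frobenius\<close>

lemma frob_add:
  assumes "prime p" "CHAR('a::comm_ring_1) = p"
  shows "((a::'a) + b) ^ (p ^ r) = a ^ (p ^ r) + b ^ (p ^ r)"
  by (rule freshmans_dream') (use assms in auto)

lemma frob_module:
  assumes "prime p" "CHAR('a::comm_ring_1) = p"
  shows "module (frob_act p r :: 'a \<Rightarrow> 'a \<Rightarrow> 'a)"
  by standard (simp_all add: frob_act_def frob_add[OF assms] algebra_simps power_mult_distrib)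

lemma frob_good:
  assumes "prime p" "CHAR('a::comm_ring_1) = p" "r \<ge> 1"
    and hyp: "\<forall>x :: nat \<Rightarrow> 'a. (\<forall>i<p. x i \<in> maxideal) \<longrightarrow> (\<Prod>i<p. x i) = 0"
  shows "good (frob_act p r :: 'a \<Rightarrow> 'a \<Rightarrow> 'a) (*)"
  unfolding good_def
proof (intro conjI allI ballI)
  show "module (frob_act p r :: 'a \<Rightarrow> 'a \<Rightarrow> 'a)" by (rule frob_module[OF assms(1,2)])
  show "module ((*) :: 'a \<Rightarrow> 'a \<Rightarrow> 'a)" by (rule module_mult)
  show "frob_act p r a (c * v) = c * frob_act p r a v" for a c v :: 'a
    by (simp add: frob_act_def algebra_simps)
  fix a v :: 'a assume a: "a \<in> maxideal"
  have "a ^ p = 0" using hyp[rule_format, of "\<lambda>_. a"] a by simp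
  moreover have "p \<le> p ^ r" using assms(3) prime_gt_0_nat[OF assms(1)]
    by (metis One_nat_def le_less_linear not_less_eq_eq power_increasing_iff power_one_right prime_gt_1_nat[OF assms(1)])
  ultimately have "a ^ (p ^ r) = 0" by (metis le_add_diff_inverse mult_zero_left power_add)
  thus "frob_act p r a v = 0" by (simp add: frob_act_def)
qed

section \<open>Finite generation and resolutions\<close>

lemma lin_sub:
  fixes sc :: "'a::comm_ring_1 \<Rightarrow> 'v::ab_group_add \<Rightarrow> 'v"
  assumes m: "module sc"
  shows "is_submod 0 (+) sc (lin sc g n ` vecs n)"
  unfolding is_submod_def
proof (intro conjI ballI allI)
  interpret module sc by (rule m)
  show "0 \<in> lin sc g n ` vecs n"
    by (rule image_eqI[of _ _ 0]) (auto simp: lin_def vecs_def)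
next
  interpret module sc by (rule m)
  fix u v assume "u \<in> lin sc g n ` vecs n" "v \<in> lin sc g n ` vecs n"
  then obtain x y where "x \<in> vecs n" "y \<in> vecs n" "u = lin sc g n x" "v = lin sc g n y" by auto
  moreover have "lin sc g n (x + y) = lin sc g n x + lin sc g n y"
    by (simp add: lin_def scale_left_distrib sum.distrib)
  moreover have "x + y \<in> vecs n" using calculation unfolding vecs_def by auto
  ultimately show "u + v \<in> lin sc g n ` vecs n" by (metis image_eqI)
next
  interpret module sc by (rule m)
  fix c u assume "u \<in> lin sc g n ` vecs n"
  then obtain x where x: "x \<in> vecs n" "u = lin sc g n x" by auto
  have "lin sc g n (\<lambda>k. c * x k) = sc c (lin sc g n x)"
    by (simp add: lin_def scale_sum_right)
  moreover have "(\<lambda>k. c * x k) \<in> vecs n" using x unfolding vecs_def by auto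
  ultimately show "sc c u \<in> lin sc g n ` vecs n" using x by (metis image_eqI)
qed

lemma lin_in:
  assumes sK: "is_submod 0 (+) sc K" and g: "\<forall>k<n. g k \<in> K"
  shows "lin sc g n ` vecs n \<subseteq> K"
proof
  fix u assume "u \<in> lin sc g n ` vecs n"
  then obtain x where "u = lin sc g n x" by auto
  moreover have "lin sc g n x \<in> K" unfolding lin_def
    by (rule sm_sum[OF sK]) (use sm_scale[OF sK] g in auto)
  ultimately show "u \<in> K" by simp
qed

lemma fg:
  fixes sc :: "'a::comm_ring_1 \<Rightarrow> 'v::ab_group_add \<Rightarrow> 'v"
  assumes m: "module sc" and sK: "is_submod 0 (+) sc K" and fin: "len 0 (+) sc {0} K \<noteq> \<infinity>"
  shows "\<exists>n g. (\<forall>k<n. g k \<in> K) \<and> K = lin sc g n ` vecs n"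
proof (rule ccontr)
  assume nfg: "\<not> ?thesis"
  have chains: "\<exists>g Ch. (\<forall>k<n. g k \<in> K) \<and> chn sc {0} (lin sc g n ` vecs n) n Ch" for n
  proof (induction n)
    case 0
    have "lin sc (\<lambda>_. 0) 0 ` vecs 0 = {0}" by (auto simp: lin_def vecs_def)
    thus ?case using sm_zero[OF m] by (intro exI[of _ "\<lambda>_. 0"] exI[of _ "\<lambda>_. {0}"]) (auto simp: chn_def)
  next
    case (Suc n)
    then obtain g Ch where g: "\<forall>k<n. g k \<in> K" and c: "chn sc {0} (lin sc g n ` vecs n) n Ch" by blast
    define W where "W = lin sc g n ` vecs n"
    have WK: "W \<subseteq> K" unfolding W_def by (rule lin_in[OF sK g])
    have "W \<noteq> K" using nfg g unfolding W_def by blast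
    then obtain y where y: "y \<in> K" "y \<notin> W" using WK by auto
    define g' where "g' = g(n := y)"
    define W' where "W' = lin sc g' (Suc n) ` vecs (Suc n)"
    have g': "\<forall>k<Suc n. g' k \<in> K" using g y unfolding g'_def by (auto simp: less_Suc_eq)
    have WW': "W \<subseteq> W'"
    proof
      fix w assume "w \<in> W"
      then obtain x where x: "x \<in> vecs n" "w = lin sc g n x" unfolding W_def by auto
      have "lin sc g' (Suc n) x = lin sc g n x"
        using x(1) unfolding lin_def g'_def vecs_def by (simp add: module.scale_zero_left[OF m])
      moreover have "x \<in> vecs (Suc n)" using x(1) unfolding vecs_def by auto
      ultimately show "w \<in> W'" unfolding W'_def using x by (metis image_eqI)
    qed
    have "y \<in> W'"
    proof -
      define e where "e = (\<lambda>k. if k = n then (1::'a) else 0)"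
      have "lin sc g' (Suc n) e = y"
        unfolding lin_def e_def g'_def by (simp add: module.scale_zero_left[OF m] module.scale_one[OF m])
      moreover have "e \<in> vecs (Suc n)" unfolding e_def vecs_def by auto
      ultimately show ?thesis unfolding W'_def by (metis image_eqI)
    qed
    hence sub: "W \<subset> W'" using WW' y by auto
    define Ch' where "Ch' = Ch(Suc n := W')"
    have "chn sc {0} W' (Suc n) Ch'"
      unfolding chn_def
    proof (intro conjI allI impI)
      show "Ch' 0 = {0}" using c unfolding Ch'_def chn_def by simp
      show "Ch' (Suc n) = W'" unfolding Ch'_def by simp
    next
      fix i assume "i \<le> Suc n"
      thus "is_submod 0 (+) sc (Ch' i)" using c lin_sub[OF m] unfolding Ch'_def chn_def W'_def
        by (auto simp: le_Suc_eq)
    next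
      fix i assume i: "i < Suc n"
      show "Ch' i \<subset> Ch' (Suc i)"
      proof (cases "i = n")
        case True thus ?thesis using c sub unfolding Ch'_def chn_def W_def by simp
      next
        case False thus ?thesis using c i unfolding Ch'_def chn_def by auto
      qed
    qed
    thus ?case using g' unfolding W'_def by blast
  qed
  have "enat n \<le> len 0 (+) sc {0} K" for n
  proof -
    obtain g Ch where g: "\<forall>k<n. g k \<in> K" and c: "chn sc {0} (lin sc g n ` vecs n) n Ch"
      using chains by blast
    have "enat n \<le> len 0 (+) sc {0} (lin sc g n ` vecs n)" by (rule len_ge[OF c])
    also have "\<dots> \<le> len 0 (+) sc {0} K"
      by (rule len_mono_right[OF m sm_zero[OF m] lin_sub[OF m] sK])
         (use lin_in[OF sK g] sm_0[OF lin_sub[OF m, of g n]] in auto)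
    finally show ?thesis .
  qed
  note le = this
  obtain N where "len 0 (+) sc {0} K = enat N" using fin by auto
  thus False using le[of "Suc N"] by simp
qed

lemma sum_fun_app: "(\<Sum>k\<in>A. f k) i = (\<Sum>k\<in>A. f k i)"
  by (induction A rule: infinite_finite_induct) auto

lemma idm_im1: "idm i = im1" by (simp add: fun_eq_iff idm_def im1_def)

lemma fin_vecs_sub:
  fixes K :: "(nat \<Rightarrow> 'a::comm_ring_1) set"
  assumes Rf: "len 0 (+) ((*) :: 'a \<Rightarrow> 'a \<Rightarrow> 'a) {0} UNIV \<noteq> \<infinity>"
    and sK: "is_submod 0 (+) (vsc (*)) K" and Kv: "K \<subseteq> vecs n"
  shows "len 0 (+) (vsc (*)) {0} K \<noteq> \<infinity>"
proof -
  have mv: "module (vsc ((*) :: 'a \<Rightarrow> 'a \<Rightarrow> 'a) :: 'a \<Rightarrow> (nat \<Rightarrow> 'a) \<Rightarrow> _)" by (rule module_vsc[OF module_mult])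
  have "len 0 (+) (vsc (*)) {0} K \<le> len 0 (+) (vsc (*)) {0} (vecs n :: (nat \<Rightarrow> 'a) set)"
    by (rule len_mono_right[OF mv sm_zero[OF mv] sK]) (use sm_S[OF module_mult, of "{..<n}"] sm_0[OF sK] Kv in \<open>auto simp: vecs_S\<close>)
  also have "\<dots> = of_nat n * len 0 (+) ((*) :: 'a \<Rightarrow> 'a \<Rightarrow> 'a) {0} UNIV"
    using len_S[OF module_mult, of "{..<n}"] by (simp add: vecs_S)
  finally have le: "len 0 (+) (vsc (*)) {0} K \<le> of_nat n * len 0 (+) ((*) :: 'a \<Rightarrow> 'a \<Rightarrow> 'a) {0} UNIV" .
  obtain N where N: "len 0 (+) ((*) :: 'a \<Rightarrow> 'a \<Rightarrow> 'a) {0} UNIV = enat N" using Rf by auto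
  show ?thesis
  proof
    assume "len 0 (+) (vsc (*)) {0} K = \<infinity>"
    thus False using le N by (simp add: of_nat_eq_enat)
  qed
qed

lemma gen_matrix:
  fixes K :: "(nat \<Rightarrow> 'a::comm_ring_1) set"
  assumes Rf: "len 0 (+) ((*) :: 'a \<Rightarrow> 'a \<Rightarrow> 'a) {0} UNIV \<noteq> \<infinity>"
    and sK: "is_submod 0 (+) (vsc (*)) K" and Kv: "K \<subseteq> vecs n"
  shows "\<exists>q Dm. K = mv (*) Dm n q ` vecs q"
proof -
  have mv: "module (vsc ((*) :: 'a \<Rightarrow> 'a \<Rightarrow> 'a) :: 'a \<Rightarrow> (nat \<Rightarrow> 'a) \<Rightarrow> _)" by (rule module_vsc[OF module_mult])
  obtain q g where g: "\<forall>k<q. g k \<in> K" and Kg: "K = lin (vsc (*)) g q ` vecs q"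
    using fg[OF mv sK fin_vecs_sub[OF Rf sK Kv]] by blast
  define Dm where "Dm = (\<lambda>i k. g k i)"
  have "lin (vsc (*)) g q x = mv (*) Dm n q x" for x
  proof
    fix i
    have "lin (vsc (*)) g q x i = (\<Sum>k<q. x k * g k i)"
      unfolding lin_def by (simp add: sum_fun_app vsc_app)
    moreover have "g k i = 0" if "k < q" "\<not> i < n" for k
      using g that Kv unfolding vecs_def by auto
    ultimately show "lin (vsc (*)) g q x i = mv (*) Dm n q x i"
      unfolding mv_def Dm_def by (auto simp: mult.commute)
  qed
  thus ?thesis using Kg by (intro exI[of _ q] exI[of _ Dm]) (simp add: image_def)
qed

definition kg :: "(nat \<Rightarrow> 'a) set \<Rightarrow> nat \<Rightarrow> nat \<times> (nat \<Rightarrow> nat \<Rightarrow> 'a::comm_ring_1)" where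
  "kg K n = (SOME qD. K = mv (*) (snd qD) n (fst qD) ` vecs (fst qD))"

primrec rs :: "nat \<Rightarrow> (nat \<Rightarrow> 'a) set \<Rightarrow> nat \<Rightarrow> nat \<times> (nat \<Rightarrow> nat \<Rightarrow> 'a::comm_ring_1) \<times> (nat \<Rightarrow> 'a) set" where
  "rs b0 K0 0 = (b0, (\<lambda>_ _. 0), K0)"
| "rs b0 K0 (Suc i) = (let st = rs b0 K0 i; qD = kg (snd (snd st)) (fst st) in
     (fst qD, snd qD, {x \<in> vecs (fst qD). mv (*) (snd qD) (fst st) (fst qD) x = 0}))"

lemma ker_sub:
  fixes D :: "nat \<Rightarrow> nat \<Rightarrow> 'a::comm_ring_1"
  shows "is_submod 0 (+) (vsc (*)) {x \<in> vecs b. mv (*) D a b x = 0}"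
  unfolding is_submod_def
proof (intro conjI ballI allI)
  show "0 \<in> {x \<in> vecs b. mv (*) D a b x = 0}" using mv_zero[OF module_mult] by (simp add: vecs_def)
next
  fix x y assume "x \<in> {x \<in> vecs b. mv (*) D a b x = 0}" "y \<in> {x \<in> vecs b. mv (*) D a b x = 0}"
  thus "x + y \<in> {x \<in> vecs b. mv (*) D a b x = 0}"
    by (simp add: mv_add[OF module_mult] vecs_def)
next
  fix c x assume "x \<in> {x \<in> vecs b. mv (*) D a b x = 0}"
  moreover have "mv (*) D a b (vsc (*) c x) = vsc (*) c (mv (*) D a b x)"
    by (rule mv_vsc[OF module_mult module_mult]) (simp add: algebra_simps)
  ultimately show "vsc (*) c x \<in> {x \<in> vecs b. mv (*) D a b x = 0}"
    by (simp add: vecs_def vsc_def fun_eq_iff)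
qed

lemma rs_props:
  fixes K0 :: "(nat \<Rightarrow> 'a::comm_ring_1) set"
  assumes Rf: "len 0 (+) ((*) :: 'a \<Rightarrow> 'a \<Rightarrow> 'a) {0} UNIV \<noteq> \<infinity>"
    and sK0: "is_submod 0 (+) (vsc (*)) K0" and K0v: "K0 \<subseteq> vecs b0"
  defines "bb \<equiv> \<lambda>i. fst (rs b0 K0 i)" and "DD \<equiv> \<lambda>i. fst (snd (rs b0 K0 i))"
    and "KK \<equiv> \<lambda>i. snd (snd (rs b0 K0 i))"
  shows "is_submod 0 (+) (vsc (*)) (KK i) \<and> KK i \<subseteq> vecs (bb i)"
    and "KK i = mv (*) (DD (Suc i)) (bb i) (bb (Suc i)) ` vecs (bb (Suc i))"
    and "KK (Suc i) = {x \<in> vecs (bb (Suc i)). mv (*) (DD (Suc i)) (bb i) (bb (Suc i)) x = 0}"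
    and "bb 0 = b0" "KK 0 = K0"
proof -
  show K3: "KK (Suc i) = {x \<in> vecs (bb (Suc i)). mv (*) (DD (Suc i)) (bb i) (bb (Suc i)) x = 0}" for i
    unfolding bb_def DD_def KK_def by (simp add: Let_def)
  show I1: "is_submod 0 (+) (vsc (*)) (KK i) \<and> KK i \<subseteq> vecs (bb i)" for i
  proof (cases i)
    case 0 thus ?thesis using sK0 K0v unfolding KK_def bb_def by simp
  next
    case (Suc j) thus ?thesis using K3[of j] ker_sub by auto
  qed
  show "bb 0 = b0" "KK 0 = K0" unfolding bb_def KK_def by simp_all
  have ex: "\<exists>qD. KK i = mv (*) (snd qD) (bb i) (fst qD) ` vecs (fst qD)"
    using gen_matrix[OF Rf conjunct1[OF I1[of i]] conjunct2[OF I1[of i]]] by auto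
  have "KK i = mv (*) (snd (kg (KK i) (bb i))) (bb i) (fst (kg (KK i) (bb i))) ` vecs (fst (kg (KK i) (bb i)))"
    unfolding kg_def by (rule someI_ex[OF ex])
  moreover have "DD (Suc i) = snd (kg (KK i) (bb i))" "bb (Suc i) = fst (kg (KK i) (bb i))"
    unfolding bb_def DD_def KK_def by (simp_all add: Let_def)
  ultimately show "KK i = mv (*) (DD (Suc i)) (bb i) (bb (Suc i)) ` vecs (bb (Suc i))" by simp
qed

lemma lin_add: "module smul \<Longrightarrow> lin smul g n (x + y) = lin smul g n x + lin smul g n y"
  by (simp add: lin_def module.scale_left_distrib sum.distrib)
lemma lin_scale: "module smul \<Longrightarrow> lin smul g n (vsc (*) c x) = smul c (lin smul g n x)"
  by (simp add: lin_def vsc_def module.scale_sum_right module.scale_scale)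

lemma free_res_exists:
  fixes smul :: "'a::comm_ring_1 \<Rightarrow> 'm::ab_group_add \<Rightarrow> 'm"
  assumes ms: "module smul" and Mf: "len 0 (+) smul {0} UNIV \<noteq> \<infinity>"
    and Rf: "len 0 (+) ((*) :: 'a \<Rightarrow> 'a \<Rightarrow> 'a) {0} UNIV \<noteq> \<infinity>"
  shows "\<exists>g b D. free_res smul g b D"
proof -
  obtain n0 g where g: "UNIV = lin smul g n0 ` vecs n0"
    using fg[OF ms sm_UNIV Mf] by blast
  define K0 where "K0 = {x \<in> vecs n0. lin smul g n0 x = 0}"
  have sK0: "is_submod 0 (+) (vsc (*)) K0"
    unfolding is_submod_def K0_def
  proof (intro conjI ballI allI)
    show "0 \<in> {x \<in> vecs n0. lin smul g n0 x = 0}"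
      by (simp add: vecs_def lin_def module.scale_zero_left[OF ms])
    fix x y assume "x \<in> {x \<in> vecs n0. lin smul g n0 x = 0}" "y \<in> {x \<in> vecs n0. lin smul g n0 x = 0}"
    thus "x + y \<in> {x \<in> vecs n0. lin smul g n0 x = 0}" by (simp add: lin_add[OF ms] vecs_def)
  next
    fix c x assume x: "x \<in> {x \<in> vecs n0. lin smul g n0 x = 0}"
    have "lin smul g n0 (vsc (*) c x) = smul c (lin smul g n0 x)" by (rule lin_scale[OF ms])
    also have "\<dots> = 0" using x by (simp add: module.scale_zero_right[OF ms])
    finally have "lin smul g n0 (vsc (*) c x) = 0" .
    moreover have "vsc (*) c x \<in> vecs n0" using x by (simp add: vecs_def vsc_def)
    ultimately show "vsc (*) c x \<in> {x \<in> vecs n0. lin smul g n0 x = 0}" by simp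
  qed
  have K0v: "K0 \<subseteq> vecs n0" unfolding K0_def by auto
  define bb where "bb = (\<lambda>i. fst (rs n0 K0 i))"
  define DD where "DD = (\<lambda>i. fst (snd (rs n0 K0 i)))"
  define KK where "KK = (\<lambda>i. snd (snd (rs n0 K0 i)))"
  have P2: "KK i = mv (*) (DD (Suc i)) (bb i) (bb (Suc i)) ` vecs (bb (Suc i))" for i
    unfolding bb_def DD_def KK_def by (rule rs_props(2)[OF Rf sK0 K0v])
  have P3: "KK (Suc i) = {x \<in> vecs (bb (Suc i)). mv (*) (DD (Suc i)) (bb i) (bb (Suc i)) x = 0}" for i
    unfolding bb_def DD_def KK_def by (rule rs_props(3)[OF Rf sK0 K0v])
  have Pi: "mv (*) (idm i) (bb i) (bb i) ` vecs (bb i) = vecs (bb i)" for i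
    using mv_im1[OF module_mult] mv_vecs unfolding idm_im1 by (metis (no_types, lifting) image_cong image_ident)
  have "free_res smul g bb DD"
    unfolding free_res_def proj_res_def Let_def Pi
  proof (intro conjI allI impI ballI)
    show "mv (*) (idm i) (bb i) (bb i) (mv (*) (idm i) (bb i) (bb i) x) = mv (*) (idm i) (bb i) (bb i) x"
      if "x \<in> vecs (bb i)" for i x
    proof -
      have "mv (*) im1 (bb i) (bb i) x = x" by (rule mv_im1[OF module_mult that])
      thus ?thesis unfolding idm_im1 by simp
    qed
    have b0: "bb 0 = n0" unfolding bb_def by simp
    show "lin smul g (bb 0) ` vecs (bb 0) = UNIV" using g b0 by simp
    show "{x \<in> vecs (bb 0). lin smul g (bb 0) x = 0} = mv (*) (DD 1) (bb 0) (bb 1) ` vecs (bb 1)"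
    proof -
      have k0: "KK 0 = K0" by (simp add: KK_def)
      have "{x \<in> vecs (bb 0). lin smul g (bb 0) x = 0} = KK 0" using k0 b0 unfolding K0_def by simp
      also have "\<dots> = mv (*) (DD 1) (bb 0) (bb 1) ` vecs (bb 1)" using P2[of 0] by simp
      finally show ?thesis .
    qed
    fix i :: nat assume i: "1 \<le> i"
    then obtain j where j: "i = Suc j" by (cases i) auto
    show "{x \<in> vecs (bb i). mv (*) (DD i) (bb (i - 1)) (bb i) x = 0} = mv (*) (DD (Suc i)) (bb i) (bb (Suc i)) ` vecs (bb (Suc i))"
      using P3[of j] P2[of i] j by simp
  qed
  thus ?thesis by blast
qed

lemma idm_img: "mv (*) (idm i) n n ` vecs n = (vecs n :: (nat \<Rightarrow> 'a::comm_ring_1) set)"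
proof -
  have "mv (*) (idm i) n n x = x" if "x \<in> vecs n" for x :: "nat \<Rightarrow> 'a"
    unfolding idm_im1 by (rule mv_im1[OF module_mult that])
  thus ?thesis by (metis (no_types, lifting) image_cong image_ident)
qed

lemma fr_exact:
  assumes fr: "free_res smul g b D" and i: "1 \<le> i"
  shows "{x \<in> vecs (b i). mv (*) (D i) (b (i - 1)) (b i) x = 0} = mv (*) (D (Suc i)) (b i) (b (Suc i)) ` vecs (b (Suc i))"
  using fr i unfolding free_res_def proj_res_def Let_def idm_img by auto

lemma fr_exact0:
  assumes fr: "free_res smul g b D"
  shows "{x \<in> vecs (b 0). lin smul g (b 0) x = 0} = mv (*) (D 1) (b 0) (b 1) ` vecs (b 1)"
    and "lin smul g (b 0) ` vecs (b 0) = UNIV"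
  using fr unfolding free_res_def proj_res_def Let_def idm_img by auto

lemma fr_comp:
  fixes D :: "nat \<Rightarrow> nat \<Rightarrow> nat \<Rightarrow> 'a::comm_ring_1"
  assumes fr: "free_res smul g b D" and i: "1 \<le> i"
  shows "meq (b (i - 1)) (b (Suc i)) (mm (b i) (D i) (D (Suc i))) (\<lambda>_ _. 0)"
proof (rule mat_eq_from_mv)
  fix x :: "nat \<Rightarrow> 'a" assume x: "x \<in> vecs (b (Suc i))"
  have "mv (*) (D (Suc i)) (b i) (b (Suc i)) x \<in> {x \<in> vecs (b i). mv (*) (D i) (b (i - 1)) (b i) x = 0}"
    using fr_exact[OF fr i] x by auto
  hence "mv (*) (D i) (b (i - 1)) (b i) (mv (*) (D (Suc i)) (b i) (b (Suc i)) x) = 0" by simp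
  moreover have "mv (*) (\<lambda>_ _. 0) (b (i - 1)) (b (Suc i)) x = (0 :: nat \<Rightarrow> 'a)"
    unfolding mv_def by (simp add: fun_eq_iff)
  ultimately show "mv (*) (mm (b i) (D i) (D (Suc i))) (b (i - 1)) (b (Suc i)) x =
         mv (*) (\<lambda>_ _. 0) (b (i - 1)) (b (Suc i)) x"
    by (simp add: mv_comp[OF module_mult])
qed

lemma fr_comp_act:
  fixes D :: "nat \<Rightarrow> nat \<Rightarrow> nat \<Rightarrow> 'a::comm_ring_1" and act :: "'a \<Rightarrow> 'v::ab_group_add \<Rightarrow> 'v"
  assumes fr: "free_res smul g b D" and i: "1 \<le> i" and m: "module act"
  shows "mv act (D i) (b (i - 1)) (b i) (mv act (D (Suc i)) (b i) (b (Suc i)) x) = 0"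
proof -
  have "mv act (D i) (b (i - 1)) (b i) (mv act (D (Suc i)) (b i) (b (Suc i)) x)
      = mv act (mm (b i) (D i) (D (Suc i))) (b (i - 1)) (b (Suc i)) x" by (simp add: mv_comp[OF m])
  also have "\<dots> = mv act (\<lambda>_ _. 0) (b (i - 1)) (b (Suc i)) x" by (rule mv_meq[OF fr_comp[OF fr i]])
  also have "\<dots> = 0" unfolding mv_def by (simp add: fun_eq_iff module.scale_zero_left[OF m])
  finally show ?thesis .
qed

lemma img_sub:
  fixes act :: "'a::comm_ring_1 \<Rightarrow> 'v::ab_group_add \<Rightarrow> 'v"
  assumes g: "good act sc"
  shows "is_submod 0 (+) (vsc sc) (mv act D m n ` vecs n)"
  unfolding is_submod_def
proof (intro conjI ballI allI)
  have m: "module act" and ms: "module sc" using g by (auto simp: good_def)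
  show "0 \<in> mv act D m n ` vecs n" using mv_zero[OF m] by (metis image_eqI sm_0 sm_S[OF ms] vecs_S)
  fix u v assume "u \<in> mv act D m n ` vecs n" "v \<in> mv act D m n ` vecs n"
  then obtain x y where "x \<in> vecs n" "y \<in> vecs n" "u = mv act D m n x" "v = mv act D m n y" by auto
  moreover have "x + y \<in> vecs n" using calculation unfolding vecs_def by auto
  ultimately show "u + v \<in> mv act D m n ` vecs n" using good_lin(1)[OF g] by (metis image_eqI)
next
  have ms: "module sc" using g by (auto simp: good_def)
  fix c u assume "u \<in> mv act D m n ` vecs n"
  then obtain x where x: "x \<in> vecs n" "u = mv act D m n x" by auto
  moreover have "vsc sc c x \<in> vecs n" using x sm_scale[OF sm_S[OF ms]] by (metis vecs_S)
  ultimately show "vsc sc c u \<in> mv act D m n ` vecs n" using good_lin(2)[OF g] by (metis image_eqI)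
qed

lemma ker_sub_act:
  fixes act :: "'a::comm_ring_1 \<Rightarrow> 'v::ab_group_add \<Rightarrow> 'v"
  assumes g: "good act sc"
  shows "is_submod 0 (+) (vsc sc) {y \<in> vecs n. mv act D m n y = 0}"
  unfolding is_submod_def
proof (intro conjI ballI allI)
  have m: "module act" and ms: "module sc" using g by (auto simp: good_def)
  show "0 \<in> {y \<in> vecs n. mv act D m n y = 0}" using mv_zero[OF m] by (simp add: vecs_def)
  fix u v assume "u \<in> {y \<in> vecs n. mv act D m n y = 0}" "v \<in> {y \<in> vecs n. mv act D m n y = 0}"
  thus "u + v \<in> {y \<in> vecs n. mv act D m n y = 0}" using good_lin(1)[OF g] by (auto simp: vecs_def)
next
  have ms: "module sc" using g by (auto simp: good_def)
  fix c u assume u: "u \<in> {y \<in> vecs n. mv act D m n y = 0}"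
  have "vsc sc c u \<in> vecs n" using u sm_scale[OF sm_S[OF ms]] by (metis (no_types, lifting) mem_Collect_eq vecs_S)
  moreover have "mv act D m n (vsc sc c u) = 0" using u good_lin(2)[OF g]
    by (simp add: vsc_def module.scale_zero_right[OF ms] fun_eq_iff)
  ultimately show "vsc sc c u \<in> {y \<in> vecs n. mv act D m n y = 0}" by simp
qed

lemma tor_formula:
  fixes act sc :: "'a::comm_ring_1 \<Rightarrow> 'v::ab_group_add \<Rightarrow> 'v" and D :: "nat \<Rightarrow> nat \<Rightarrow> nat \<Rightarrow> 'a"
  assumes fr: "free_res smul g b D" and s: "1 \<le> s" and g: "good act sc"
    and nf1: "nf (D s) (b (s - 1)) (b s) U Ui V Vi a1"
    and nf2: "nf (D (Suc s)) (b s) (b (Suc s)) U2 Ui2 V2 Vi2 a2"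
    and N: "len 0 (+) sc {0} UNIV = enat N"
  shows "len 0 (+) (vsc sc) (mv act (D (Suc s)) (b s) (b (Suc s)) ` vecs (b (Suc s)))
           {y \<in> vecs (b s). mv act (D s) (b (s - 1)) (b s) y = 0} = enat ((b s - a1 - a2) * N) \<and>
         a2 * N \<le> (b s - a1) * N"
proof -
  have m: "module act" and ms: "module sc" using g by (auto simp: good_def)
  have mv: "module (vsc sc :: 'a \<Rightarrow> (nat \<Rightarrow> 'v) \<Rightarrow> _)" by (rule module_vsc[OF ms])
  define Z where "Z = {y \<in> vecs (b s). mv act (D s) (b (s - 1)) (b s) y = 0}"
  define Bd where "Bd = mv act (D (Suc s)) (b s) (b (Suc s)) ` vecs (b (Suc s))"
  define Im where "Im = mv act (D s) (b (s - 1)) (b s) ` vecs (b s)"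
  have sZ: "is_submod 0 (+) (vsc sc) Z" unfolding Z_def by (rule ker_sub_act[OF g])
  have sB: "is_submod 0 (+) (vsc sc) Bd" unfolding Bd_def by (rule img_sub[OF g])
  have sV: "is_submod 0 (+) (vsc sc) (vecs (b s))" unfolding vecs_S by (rule sm_S[OF ms])
  have s0: "is_submod 0 (+) (vsc sc) {0::nat \<Rightarrow> 'v}" by (rule sm_zero[OF mv])
  have BZ: "Bd \<subseteq> Z" unfolding Bd_def Z_def using fr_comp_act[OF fr s m] mv_vecs by auto
  have ZV: "Z \<subseteq> vecs (b s)" unfolding Z_def by auto
  have B0: "{0} \<subseteq> Bd" using sm_0[OF sB] by auto
  have lV: "len 0 (+) (vsc sc) {0} (vecs (b s)) = enat (b s * N)"
    using len_S[OF ms, of "{..<b s}"] N by (simp add: vecs_S of_nat_eq_enat)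
  have lIm: "len 0 (+) (vsc sc) {0} Im = enat (a1 * N)"
    using nf_len[OF nf1 g] N unfolding Im_def by (simp add: of_nat_eq_enat)
  have lB: "len 0 (+) (vsc sc) {0} Bd = enat (a2 * N)"
    using nf_len[OF nf2 g] N unfolding Bd_def by (simp add: of_nat_eq_enat)
  have "len 0 (+) (vsc sc) Z (vecs (b s)) = len 0 (+) (vsc sc) (mv act (D s) (b (s - 1)) (b s) ` Z) Im"
    unfolding Im_def
  proof (rule len_map[OF mv mv _ _ sZ sV ZV])
    show "mv act (D s) (b (s - 1)) (b s) (x + y) = mv act (D s) (b (s - 1)) (b s) x + mv act (D s) (b (s - 1)) (b s) y" for x y
      by (rule good_lin(1)[OF g])
    show "mv act (D s) (b (s - 1)) (b s) (vsc sc c x) = vsc sc c (mv act (D s) (b (s - 1)) (b s) x)" for c x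
      by (rule good_lin(2)[OF g])
    show "x \<in> Z" if "x \<in> vecs (b s)" "mv act (D s) (b (s - 1)) (b s) x = 0" for x
      using that unfolding Z_def by simp
  qed
  moreover have "mv act (D s) (b (s - 1)) (b s) ` Z = {0}" using sm_0[OF sZ] unfolding Z_def by auto
  ultimately have lZV: "len 0 (+) (vsc sc) Z (vecs (b s)) = enat (a1 * N)" using lIm by simp
  have "len 0 (+) (vsc sc) {0} (vecs (b s)) = len 0 (+) (vsc sc) {0} Z + len 0 (+) (vsc sc) Z (vecs (b s))"
    by (rule len_add[OF mv s0 sZ sV]) (use B0 BZ ZV in auto)
  hence lZ0: "len 0 (+) (vsc sc) {0} Z + enat (a1 * N) = enat (b s * N)" using lV lZV by simp
  then obtain z where z: "len 0 (+) (vsc sc) {0} Z = enat z" by (cases "len 0 (+) (vsc sc) {0} Z") auto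
  hence zv: "z = b s * N - a1 * N" using lZ0 by simp
  have "len 0 (+) (vsc sc) {0} Z = len 0 (+) (vsc sc) {0} Bd + len 0 (+) (vsc sc) Bd Z"
    by (rule len_add[OF mv s0 sB sZ B0 BZ])
  hence e: "enat z = enat (a2 * N) + len 0 (+) (vsc sc) Bd Z" using z lB by simp
  then obtain y where y: "len 0 (+) (vsc sc) Bd Z = enat y" by (cases "len 0 (+) (vsc sc) Bd Z") auto
  hence "y = z - a2 * N" using e by simp
  hence "y = (b s - a1 - a2) * N" using zv by (simp add: diff_mult_distrib add_mult_distrib)
  moreover have "a2 * N \<le> (b s - a1) * N" using e y zv by (simp add: diff_mult_distrib)
  ultimately show ?thesis using y unfolding Bd_def Z_def by simp
qed

lemma sub_img_R:
  fixes A :: "nat \<Rightarrow> nat \<Rightarrow> 'a::comm_ring_1"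
  assumes sX: "is_submod 0 (+) (vsc (*)) X"
  shows "is_submod 0 (+) (vsc (*)) (mv (*) A m n ` X)"
  unfolding is_submod_def
proof (intro conjI ballI allI)
  show "0 \<in> mv (*) A m n ` X" using mv_zero[OF module_mult] sm_0[OF sX] by (metis image_eqI)
  fix u v assume "u \<in> mv (*) A m n ` X" "v \<in> mv (*) A m n ` X"
  then obtain x y where "x \<in> X" "y \<in> X" "u = mv (*) A m n x" "v = mv (*) A m n y" by auto
  thus "u + v \<in> mv (*) A m n ` X" using sm_add[OF sX] mv_add[OF module_mult] by (metis image_eqI)
next
  fix c u assume "u \<in> mv (*) A m n ` X"
  then obtain x where x: "x \<in> X" "u = mv (*) A m n x" by auto
  have "mv (*) A m n (vsc (*) c x) = vsc (*) c (mv (*) A m n x)"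
    by (rule mv_vsc[OF module_mult module_mult]) (simp add: algebra_simps)
  thus "vsc (*) c u \<in> mv (*) A m n ` X" using x sm_scale[OF sX] by (metis image_eqI)
qed

lemma inj_len_R:
  fixes Ui :: "nat \<Rightarrow> nat \<Rightarrow> 'a::comm_ring_1"
  assumes inv: "invp m U Ui" and sX: "is_submod 0 (+) (vsc (*)) X" and Xv: "X \<subseteq> vecs m"
  shows "len 0 (+) (vsc (*)) {0} (mv (*) Ui m m ` X) = len 0 (+) (vsc (*)) {0} X"
proof -
  have ms: "module (vsc ((*) :: 'a \<Rightarrow> 'a \<Rightarrow> 'a) :: 'a \<Rightarrow> (nat \<Rightarrow> 'a) \<Rightarrow> _)" by (rule module_vsc[OF module_mult])
  have "len 0 (+) (vsc (*)) {0} X = len 0 (+) (vsc (*)) (mv (*) Ui m m ` {0}) (mv (*) Ui m m ` X)"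
  proof (rule len_map[OF ms ms])
    show "mv (*) Ui m m (x + y) = mv (*) Ui m m x + mv (*) Ui m m y" for x y by (rule mv_add[OF module_mult])
    show "mv (*) Ui m m (vsc (*) c x) = vsc (*) c (mv (*) Ui m m x)" for c x
      by (rule mv_vsc[OF module_mult module_mult]) (simp add: algebra_simps)
    show "is_submod 0 (+) (vsc (*)) {0::nat \<Rightarrow> 'a}" by (rule sm_zero[OF ms])
    show "is_submod 0 (+) (vsc (*)) X" by (rule sX)
    show "{0} \<subseteq> X" using sm_0[OF sX] by auto
    fix x assume "x \<in> X" "mv (*) Ui m m x = 0"
    hence "x = mv (*) U m m (mv (*) Ui m m x)" using invp_mv[OF module_mult inv, of x] Xv by auto
    also have "\<dots> = mv (*) U m m 0" using \<open>mv (*) Ui m m x = 0\<close> by simp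
    also have "\<dots> = 0" by (rule mv_zero[OF module_mult])
    finally show "x \<in> {0}" by simp
  qed
  moreover have "mv (*) Ui m m ` {0} = {0}" using mv_zero[OF module_mult] by simp
  ultimately show ?thesis by simp
qed

lemma mv_dim0: "mv act D 0 n x = 0"
  unfolding mv_def by (simp add: fun_eq_iff)

lemma vecs0: "vecs 0 = {0}"
  unfolding vecs_def by (auto simp: fun_eq_iff)

lemma pd_finite:
  fixes smul :: "'a::comm_ring_1 \<Rightarrow> 'm::ab_group_add \<Rightarrow> 'm" and sck :: "'a \<Rightarrow> 'k::ab_group_add \<Rightarrow> 'k"
    and D :: "nat \<Rightarrow> nat \<Rightarrow> nat \<Rightarrow> 'a"
  assumes fr: "free_res smul g b D" and s: "1 \<le> s"
    and gk: "good sck sck" and k1: "len 0 (+) sck {0} UNIV = 1"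
    and Rf: "len 0 (+) ((*) :: 'a \<Rightarrow> 'a \<Rightarrow> 'a) {0} UNIV = enat LR"
    and nf1: "nf (D s) (b (s - 1)) (b s) U Ui V Vi a"
    and rk: "len 0 (+) (vsc sck) {0} (mv sck (D (Suc s)) (b s) (b (Suc s)) ` vecs (b (Suc s))) = enat (b s - a)"
  shows "finite_pd smul"
proof -
  define m where "m = b (s - 1)"
  define n where "n = b s"
  define p' where "p' = b (Suc s)"
  define Q where "Q = mm m U (mm n (D s) V)"
  have iU: "invp m U Ui" and iV: "invp n V Vi" and am: "a \<le> m" and an: "a \<le> n" and nq: "nfq a m n Q"
    using nf1 unfolding nf_def m_def n_def Q_def by auto
  have mR: "module ((*) :: 'a \<Rightarrow> 'a \<Rightarrow> 'a)" by (rule module_mult)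
  have mvR: "module (vsc ((*) :: 'a \<Rightarrow> 'a \<Rightarrow> 'a) :: 'a \<Rightarrow> (nat \<Rightarrow> 'a) \<Rightarrow> _)" by (rule module_vsc[OF module_mult])
  define Dp where "Dp = mm n Vi (D (Suc s))"
  have VVi: "mv (*) V n n (mv (*) Vi n n z) = z" if "z \<in> vecs n" for z :: "nat \<Rightarrow> 'a"
    by (rule invp_mv[OF mR iV that])
  have ViV: "mv (*) Vi n n (mv (*) V n n z) = z" if "z \<in> vecs n" for z :: "nat \<Rightarrow> 'a"
    by (rule invp_mv[OF mR invp_sym[OF iV] that])
  have UUi: "mv (*) U m m (mv (*) Ui m m z) = z" if "z \<in> vecs m" for z :: "nat \<Rightarrow> 'a"
    by (rule invp_mv[OF mR iU that])
  have Qmap: "mv (*) Q m n y = mv (*) U m m (mv (*) (D s) m n (mv (*) V n n y))" for y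
    unfolding Q_def by (simp add: mv_comp[OF mR])
  have QDp: "mv (*) Q m n (mv (*) Dp n p' x) = 0" for x
  proof -
    have "mv (*) Dp n p' x = mv (*) Vi n n (mv (*) (D (Suc s)) n p' x)"
      unfolding Dp_def by (simp add: mv_comp[OF mR])
    hence "mv (*) V n n (mv (*) Dp n p' x) = mv (*) (D (Suc s)) n p' x" using VVi[OF mv_vecs] by simp
    hence "mv (*) Q m n (mv (*) Dp n p' x) = mv (*) U m m (mv (*) (D s) m n (mv (*) (D (Suc s)) n p' x))"
      using Qmap by simp
    also have "\<dots> = mv (*) U m m 0" using fr_comp_act[OF fr s mR] unfolding m_def n_def p'_def by simp
    also have "\<dots> = 0" by (rule mv_zero[OF mR])
    finally show ?thesis .
  qed
  have Qrow: "mv (*) Q m n y i = y i" if i: "i < a" and y: "y \<in> vecs n" for i y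
  proof -
    have "mv (*) Q m n y i = (\<Sum>k<n. im1 i k * y k)"
      unfolding mv_def using i am nq unfolding nfq_def by (auto intro!: sum.cong)
    also have "\<dots> = y i" using i an by (simp add: sum_im1_l)
    finally show ?thesis .
  qed
  define Ta where "Ta = (S {a..<n} :: (nat \<Rightarrow> 'a) set)"
  have imDp_T: "mv (*) Dp n p' ` vecs p' \<subseteq> Ta"
  proof
    fix y assume "y \<in> mv (*) Dp n p' ` vecs p'"
    then obtain x where yx: "y = mv (*) Dp n p' x" by auto
    have yv: "y \<in> vecs n" using yx mv_vecs by simp
    have "y i = 0" if "i < a" for i using Qrow[OF that yv] QDp[of x] yx by (simp add: fun_eq_iff)
    thus "y \<in> Ta" using yv unfolding Ta_def S_def vecs_def by auto
  qed
  have rkDp: "len 0 (+) (vsc sck) {0} (mv sck Dp n p' ` vecs p') = enat (n - a)"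
  proof -
    have msk: "module sck" using gk by (simp add: good_def)
    have eqimg: "mv sck Dp n p' ` vecs p' = mv sck Vi n n ` (mv sck (D (Suc s)) n p' ` vecs p')"
      unfolding Dp_def by (simp add: mv_comp[OF msk] image_image)
    have "len 0 (+) (vsc sck) {0} (mv sck Dp n p' ` vecs p') = len 0 (+) (vsc sck) {0} (mv sck (D (Suc s)) n p' ` vecs p')"
    proof -
      have "mv sck (D (Suc s)) n p' ` vecs p' \<subseteq> vecs n" using mv_vecs by blast
      from inj_len[OF gk iV img_sub[OF gk, of "D (Suc s)" n p'] this] eqimg
      show ?thesis by simp
    qed
    thus ?thesis using rk unfolding n_def p'_def by simp
  qed
  obtain U' Ui' V' Vi' a' where nf2: "nf Dp n p' U' Ui' V' Vi' a'" using nf_exists by blast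
  have "enat (n - a) = of_nat a' * 1" using nf_len[OF nf2 gk] k1 rkDp by simp
  hence a'v: "a' = n - a" by (simp add: of_nat_eq_enat)
  define Q' where "Q' = mm n U' (mm p' Dp V')"
  have iU': "invp n U' Ui'" and iV': "invp p' V' Vi'" and a'n: "a' \<le> n" and a'p: "a' \<le> p'"
    and nq': "nfq a' n p' Q'" using nf2 unfolding nf_def Q'_def by auto
  have S_sub: "S {..<a'} \<subseteq> mv (*) Q' n p' ` vecs p'"
  proof
    fix z :: "nat \<Rightarrow> 'a" assume z: "z \<in> S {..<a'}"
    have zv: "z \<in> vecs p'" using z a'p unfolding S_def vecs_def by auto
    have "mv (*) Q' n p' z = z"
    proof
      fix i
      show "mv (*) Q' n p' z i = z i"
      proof (cases "i < n")
        case True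
        have "(\<Sum>k<p'. Q' i k * z k) = (\<Sum>k<p'. im1 i k * z k)"
        proof (rule sum.cong)
          fix k assume k: "k \<in> {..<p'}"
          show "Q' i k * z k = im1 i k * z k"
          proof (cases "k < a'")
            case True thus ?thesis using nq' k \<open>i < n\<close> unfolding nfq_def by auto
          next
            case False thus ?thesis using z unfolding S_def by auto
          qed
        qed simp
        also have "\<dots> = z i"
        proof (cases "i < p'")
          case True thus ?thesis by (simp add: sum_im1_l)
        next
          case False
          hence "z i = 0" using z a'p unfolding S_def by auto
          moreover have "(\<Sum>k<p'. im1 i k * z k) = 0" using False by (simp add: im1_def)
          ultimately show ?thesis by simp
        qed
        finally show ?thesis unfolding mv_def using True by simp
      next
        case False
        hence "z i = 0" using z a'n unfolding S_def by auto
        thus ?thesis unfolding mv_def using False by simp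
      qed
    qed
    thus "z \<in> mv (*) Q' n p' ` vecs p'" using zv by (metis image_eqI)
  qed
  have UiS: "mv (*) Ui' n n ` S {..<a'} \<subseteq> mv (*) Dp n p' ` vecs p'"
  proof
    fix w assume "w \<in> mv (*) Ui' n n ` S {..<a'}"
    then obtain z where z: "z \<in> S {..<a'}" "w = mv (*) Ui' n n z" by auto
    obtain x where x: "x \<in> vecs p'" "z = mv (*) Q' n p' x" using S_sub z by auto
    define y where "y = mv (*) Dp n p' (mv (*) V' p' p' x)"
    have "z = mv (*) U' n n y" unfolding y_def x(2) Q'_def by (simp add: mv_comp[OF mR])
    hence "w = y" using z(2) invp_mv[OF mR invp_sym[OF iU'] mv_vecs] unfolding y_def by simp
    thus "w \<in> mv (*) Dp n p' ` vecs p'" unfolding y_def using mv_vecs by blast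
  qed
  have sS: "is_submod 0 (+) (vsc (*)) (S {..<a'} :: (nat \<Rightarrow> 'a) set)" by (rule sm_S[OF mR])
  have sT: "is_submod 0 (+) (vsc (*)) Ta" unfolding Ta_def by (rule sm_S[OF mR])
  have sUS: "is_submod 0 (+) (vsc (*)) (mv (*) Ui' n n ` S {..<a'})" by (rule sub_img_R[OF sS])
  have s0: "is_submod 0 (+) (vsc (*)) {0 :: nat \<Rightarrow> 'a}" by (rule sm_zero[OF mvR])
  have lUS: "len 0 (+) (vsc (*)) {0} (mv (*) Ui' n n ` S {..<a'}) = enat (a' * LR)"
  proof -
    have "len 0 (+) (vsc (*)) {0} (mv (*) Ui' n n ` S {..<a'}) = len 0 (+) (vsc (*)) {0} (S {..<a'} :: (nat \<Rightarrow> 'a) set)"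
      by (rule inj_len_R[OF iU' sS]) (use a'n in \<open>auto simp: S_def vecs_def\<close>)
    also have "\<dots> = enat (a' * LR)" using len_S[OF mR, of "{..<a'}"] Rf by (simp add: of_nat_eq_enat)
    finally show ?thesis .
  qed
  have lT: "len 0 (+) (vsc (*)) {0} Ta = enat ((n - a) * LR)"
    using len_S[OF mR, of "{a..<n}"] Rf unfolding Ta_def by (simp add: of_nat_eq_enat)
  have "mv (*) Ui' n n ` S {..<a'} = Ta"
  proof (rule len_eq_fin[OF mvR s0 sUS sT])
    show "{0} \<subseteq> mv (*) Ui' n n ` S {..<a'}" using sm_0[OF sUS] by auto
    show "mv (*) Ui' n n ` S {..<a'} \<subseteq> Ta" using UiS imDp_T by auto
    show "len 0 (+) (vsc (*)) {0} Ta = len 0 (+) (vsc (*)) {0} (mv (*) Ui' n n ` S {..<a'})"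
      using lUS lT a'v by simp
    show "len 0 (+) (vsc (*)) {0} Ta \<noteq> \<infinity>" using lT by simp
  qed
  hence TDp: "Ta \<subseteq> mv (*) Dp n p' ` vecs p'" using UiS by auto
  have Qcol: "Q i j = 0" if ij: "i < m" "a \<le> j" "j < n" for i j
  proof -
    define e :: "nat \<Rightarrow> 'a" where "e = (\<lambda>l. if l = j then 1 else 0)"
    have "e \<in> Ta" using ij unfolding e_def Ta_def S_def by auto
    then obtain x where "e = mv (*) Dp n p' x" using TDp by auto
    hence "mv (*) Q m n e = 0" using QDp by simp
    moreover have "mv (*) Q m n e i = Q i j" unfolding mv_def e_def using ij by (simp add: ifm2)
    ultimately show ?thesis by simp
  qed
  define Pm where "Pm = (\<lambda>i j. if j < a then im1 i j else (0::'a))"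
  define E where "E = mm n V (mm n Pm Vi)"
  have Pmv: "mv (*) Pm n n w = (\<lambda>i. if i < a then w i else 0)" for w
  proof
    fix i
    show "mv (*) Pm n n w i = (if i < a then w i else 0)"
    proof (cases "i < n")
      case True
      have "(\<Sum>k<n. Pm i k * w k) = (\<Sum>k<n. if k = i then (if i < a then w i else 0) else 0)"
        by (rule sum.cong) (auto simp: Pm_def im1_def)
      thus ?thesis unfolding mv_def using True by simp
    next
      case False thus ?thesis unfolding mv_def using an by simp
    qed
  qed
  have QP: "mv (*) Q m n (mv (*) Pm n n w) = mv (*) Q m n w" for w
  proof
    fix i
    have "(\<Sum>k<n. Q i k * (if k < a then w k else 0)) = (\<Sum>k<n. Q i k * w k)" if "i < m"
      by (rule sum.cong) (use Qcol that in auto)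
    thus "mv (*) Q m n (mv (*) Pm n n w) i = mv (*) Q m n w i"
      unfolding Pmv unfolding mv_def using an by (auto intro!: sum.cong)
  qed
  have Q0: "mv (*) Pm n n w = 0" if "mv (*) Q m n w = 0" "w \<in> vecs n" for w
    using Qrow[OF _ that(2)] that(1) unfolding Pmv by (auto simp: fun_eq_iff)
  have Ds_dec: "mv (*) (D s) m n x = mv (*) Ui m m (mv (*) Q m n (mv (*) Vi n n x))" for x
    unfolding Q_def m_def n_def by (rule nf_decomp[OF nf1 mR])
  have E_eq: "mv (*) E n n x = mv (*) V n n (mv (*) Pm n n (mv (*) Vi n n x))" for x
    unfolding E_def by (simp add: mv_comp[OF mR])
  have DE: "mv (*) (D s) m n (mv (*) E n n x) = mv (*) (D s) m n x" for x
  proof -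
    have "mv (*) Vi n n (mv (*) E n n x) = mv (*) Pm n n (mv (*) Vi n n x)"
      using E_eq ViV[OF mv_vecs] by simp
    thus ?thesis using Ds_dec QP by simp
  qed
  have Eidem: "mv (*) E n n (mv (*) E n n x) = mv (*) E n n x" for x
  proof -
    have "mv (*) Vi n n (mv (*) E n n x) = mv (*) Pm n n (mv (*) Vi n n x)"
      using E_eq ViV[OF mv_vecs] by simp
    moreover have "mv (*) Pm n n (mv (*) Pm n n w) = mv (*) Pm n n w" for w unfolding Pmv by auto
    ultimately show ?thesis using E_eq by simp
  qed
  have Eker: "mv (*) E n n x = 0" if "mv (*) (D s) m n (mv (*) E n n x) = 0" for x
  proof -
    define w where "w = mv (*) Pm n n (mv (*) Vi n n x)"
    have ViE: "mv (*) Vi n n (mv (*) E n n x) = w" unfolding w_def using E_eq ViV[OF mv_vecs] by simp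
    have "mv (*) Ui m m (mv (*) Q m n w) = 0" using that Ds_dec[of "mv (*) E n n x"] ViE by simp
    hence "mv (*) Q m n w = 0" using UUi[OF mv_vecs, of "(*)" Q n w] mv_zero[OF mR] by metis
    hence "mv (*) Pm n n w = 0" using Q0 mv_vecs unfolding w_def by blast
    moreover have "mv (*) Pm n n w = w" unfolding w_def Pmv by auto
    ultimately have "w = 0" by simp
    thus ?thesis using E_eq mv_zero[OF mR] unfolding w_def by simp
  qed
  have DEimg: "mv (*) (D s) m n ` (mv (*) E n n ` vecs n) = mv (*) (D s) m n ` vecs n"
  proof
    show "mv (*) (D s) m n ` (mv (*) E n n ` vecs n) \<subseteq> mv (*) (D s) m n ` vecs n" using mv_vecs by blast
    show "mv (*) (D s) m n ` vecs n \<subseteq> mv (*) (D s) m n ` (mv (*) E n n ` vecs n)"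
      using DE by (metis image_eqI image_subsetI)
  qed
  define b' where "b' = (\<lambda>i. if i \<le> s then b i else 0)"
  define E' where "E' = (\<lambda>i. if i = s then E else idm i)"
  have P'lt: "mv (*) (E' i) (b' i) (b' i) ` vecs (b' i) = vecs (b i)" if "i < s" for i
    using that idm_img unfolding E'_def b'_def by simp
  have P's: "mv (*) (E' s) (b' s) (b' s) ` vecs (b' s) = mv (*) E n n ` vecs n"
    unfolding E'_def b'_def n_def by simp
  have P'gt: "mv (*) (E' i) (b' i) (b' i) ` vecs (b' i) = {0}" if "s < i" for i
    using that unfolding b'_def by (simp add: vecs0 mv_dim0)
  have "proj_res smul g b' E' D"
    unfolding proj_res_def Let_def
  proof (intro conjI allI impI ballI)
    fix i and x :: "nat \<Rightarrow> 'a" assume x: "x \<in> vecs (b' i)"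
    show "mv (*) (E' i) (b' i) (b' i) (mv (*) (E' i) (b' i) (b' i) x) = mv (*) (E' i) (b' i) (b' i) x"
    proof (cases "i = s")
      case True thus ?thesis using Eidem unfolding E'_def b'_def n_def by simp
    next
      case False
      hence "mv (*) (E' i) (b' i) (b' i) x = x" unfolding E'_def idm_im1 by (simp add: mv_im1[OF mR x])
      thus ?thesis by simp
    qed
  next
    show "lin smul g (b' 0) ` (mv (*) (E' 0) (b' 0) (b' 0) ` vecs (b' 0)) = UNIV"
      using P'lt[of 0] s fr_exact0(2)[OF fr] unfolding b'_def by simp
  next
    show "{x \<in> mv (*) (E' 0) (b' 0) (b' 0) ` vecs (b' 0). lin smul g (b' 0) x = 0} =
          mv (*) (D 1) (b' 0) (b' 1) ` (mv (*) (E' 1) (b' 1) (b' 1) ` vecs (b' 1))"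
    proof (cases "s = 1")
      case True
      have "mv (*) (D 1) (b' 0) (b' 1) ` (mv (*) (E' 1) (b' 1) (b' 1) ` vecs (b' 1)) = mv (*) (D 1) (b 0) (b 1) ` vecs (b 1)"
        using DEimg P's True unfolding m_def n_def b'_def by simp
      thus ?thesis using P'lt[of 0] True fr_exact0(1)[OF fr] unfolding b'_def by simp
    next
      case False
      thus ?thesis using P'lt[of 0] P'lt[of 1] s fr_exact0(1)[OF fr] unfolding b'_def by simp
    qed
  next
    fix i :: nat assume i: "1 \<le> i"
    show "{x \<in> mv (*) (E' i) (b' i) (b' i) ` vecs (b' i). mv (*) (D i) (b' (i - 1)) (b' i) x = 0} =
          mv (*) (D (Suc i)) (b' i) (b' (Suc i)) ` (mv (*) (E' (Suc i)) (b' (Suc i)) (b' (Suc i)) ` vecs (b' (Suc i)))"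
    proof (cases "Suc i < s")
      case True
      hence "i - 1 \<le> s" "i \<le> s" "Suc i \<le> s" by auto
      thus ?thesis using True P'lt[of i] P'lt[of "Suc i"] fr_exact[OF fr i] unfolding b'_def by simp
    next
      case F1: False
      show ?thesis
      proof (cases "Suc i = s")
        case True
        have "mv (*) (D (Suc i)) (b' i) (b' (Suc i)) ` (mv (*) (E' (Suc i)) (b' (Suc i)) (b' (Suc i)) ` vecs (b' (Suc i)))
            = mv (*) (D s) m n ` vecs n"
        proof -
          have si: "s - Suc 0 = i" "s - 1 = i" using True by auto
          show ?thesis using DEimg P's True si unfolding m_def n_def b'_def by simp
        qed
        also have "\<dots> = {x \<in> vecs (b i). mv (*) (D i) (b (i - 1)) (b i) x = 0}"
        proof -
          have si: "s - Suc 0 = i" using True by auto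
          show ?thesis using fr_exact[OF fr i] True si unfolding m_def n_def by simp
        qed
        finally show ?thesis using P'lt[of i] True unfolding b'_def by simp
      next
        case F2: False
        show ?thesis
        proof (cases "i = s")
          case True
          have "{x \<in> mv (*) E n n ` vecs n. mv (*) (D s) m n x = 0} = {0}"
          proof
            show "{x \<in> mv (*) E n n ` vecs n. mv (*) (D s) m n x = 0} \<subseteq> {0}" using Eker by auto
            have "mv (*) E n n 0 = 0" by (rule mv_zero[OF mR])
            moreover have "(0 :: nat \<Rightarrow> 'a) \<in> vecs n" by (simp add: vecs_def)
            ultimately have "0 \<in> mv (*) E n n ` vecs n" by (metis image_eqI)
            thus "{0} \<subseteq> {x \<in> mv (*) E n n ` vecs n. mv (*) (D s) m n x = 0}" using mv_zero[OF mR] by simp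
          qed
          moreover have "mv (*) (D (Suc i)) (b' i) (b' (Suc i)) ` (mv (*) (E' (Suc i)) (b' (Suc i)) (b' (Suc i)) ` vecs (b' (Suc i))) = {0}"
            using P'gt[of "Suc i"] True mv_zero[OF mR] by simp
          ultimately show ?thesis using P's True s unfolding m_def n_def b'_def by simp
        next
          case False
          hence gt: "s < i" using F1 F2 by simp
          have "{x \<in> mv (*) (E' i) (b' i) (b' i) ` vecs (b' i). mv (*) (D i) (b' (i - 1)) (b' i) x = 0} = {0}"
            using P'gt[OF gt] mv_zero[OF mR] by auto
          moreover have "mv (*) (D (Suc i)) (b' i) (b' (Suc i)) ` (mv (*) (E' (Suc i)) (b' (Suc i)) (b' (Suc i)) ` vecs (b' (Suc i))) = {0}"
            using P'gt[of "Suc i"] gt mv_zero[OF mR] by simp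
          ultimately show ?thesis by simp
        qed
      qed
    qed
  qed
  moreover have "\<forall>i>s. mv (*) (E' i) (b' i) (b' i) ` vecs (b' i) = {0}" using P'gt by simp
  ultimately show ?thesis unfolding finite_pd_def by blast
qed

lemma vsc_lam: "(\<lambda>c x j. sc c (x j)) = vsc sc" by (simp add: vsc_def fun_eq_iff)

lemma tor_eq:
  assumes "(SOME (g, b, D). free_res smul g b D) = (g, b, D)" and s: "1 \<le> s"
  shows "tor_len smul act sc s = len 0 (+) (vsc sc) (mv act (D (Suc s)) (b s) (b (Suc s)) ` vecs (b (Suc s)))
           {y \<in> vecs (b s). mv act (D s) (b (s - 1)) (b s) y = 0}"
  using s unfolding tor_len_def Let_def assms(1) by (simp add: zero_fun_lam plus_fun_lam vsc_lam)

theorem proposition1p5: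
  fixes p r :: nat
    and smul :: "'a::comm_ring_1 \<Rightarrow> 'm::ab_group_add \<Rightarrow> 'm"
    and sck :: "'a \<Rightarrow> 'k::ab_group_add \<Rightarrow> 'k"
    and \<pi> :: "'a \<Rightarrow> 'k"
  assumes "prime p" and "CHAR('a) = p"
    and "local_ring TYPE('a)" and "artinian TYPE('a)"
    and "\<forall>x :: nat \<Rightarrow> 'a. (\<forall>i<p. x i \<in> maxideal) \<longrightarrow> (\<Prod>i<p. x i) = 0"
    and "module smul" and "mod_length smul \<noteq> \<infinity>" and "\<not> finite_pd smul"
    and "module sck"
    and "\<forall>x y. \<pi> (x + y) = \<pi> x + \<pi> y" and "\<forall>a x. \<pi> (a * x) = sck a (\<pi> x)"
    and "surj \<pi>" and "{x. \<pi> x = 0} = maxideal"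
    and "r \<ge> 1"
  shows "mod_length ((*) :: 'a \<Rightarrow> 'a \<Rightarrow> 'a) < \<infinity> \<and>
    (\<lambda>s. real (the_enat (tor_len smul (frob_act p r) ((*) :: 'a \<Rightarrow> 'a \<Rightarrow> 'a) s))
          / real (the_enat (tor_len smul sck sck s)))
      \<longlonglongrightarrow> real (the_enat (mod_length ((*) :: 'a \<Rightarrow> 'a \<Rightarrow> 'a)))"
proof -
  note prm = assms(1) and chr = assms(2) and loc = assms(3) and art = assms(4) and hyp = assms(5)
    and ms = assms(6) and Mf = assms(7) and npd = assms(8) and mk = assms(9) and pim = assms(11)
    and surj = assms(12) and ker = assms(13) and r1 = assms(14)
  have Rf0: "len 0 (+) ((*) :: 'a \<Rightarrow> 'a \<Rightarrow> 'a) {0} UNIV \<noteq> \<infinity>" by (rule R_fin[OF art hyp])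
  then obtain LR where Rf: "len 0 (+) ((*) :: 'a \<Rightarrow> 'a \<Rightarrow> 'a) {0} UNIV = enat LR" by auto
  have MLen: "mod_length ((*) :: 'a \<Rightarrow> 'a \<Rightarrow> 'a) = enat LR" using Rf unfolding mod_length_def .
  have gk: "good sck sck" by (rule k_good[OF mk pim surj ker loc])
  have k1: "len 0 (+) sck {0} UNIV = 1" by (rule k_len[OF mk pim surj ker loc])
  have gf: "good (frob_act p r :: 'a \<Rightarrow> 'a \<Rightarrow> 'a) (*)" by (rule frob_good[OF prm chr r1 hyp])
  have Mf': "len 0 (+) smul {0} UNIV \<noteq> \<infinity>" using Mf unfolding mod_length_def .
  have ex: "\<exists>g b D. free_res smul g b D" by (rule free_res_exists[OF ms Mf' Rf0])
  obtain g b D where gbd: "(SOME (g, b, D). free_res smul g b D) = (g, b, D)"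
    by (metis prod_cases3)
  have fr: "free_res smul g b D"
  proof -
    have "\<exists>x. case x of (g, b, D) \<Rightarrow> free_res smul g b D" using ex by auto
    from someI_ex[OF this] show ?thesis unfolding gbd by simp
  qed
  define aa where "aa s = (SOME a. \<exists>U Ui V Vi. nf (D s) (b (s - 1)) (b s) U Ui V Vi a)" for s
  have nfa: "\<exists>U Ui V Vi. nf (D s) (b (s - 1)) (b s) U Ui V Vi (aa s)" for s
  proof -
    have "\<exists>a U Ui V Vi. nf (D s) (b (s - 1)) (b s) U Ui V Vi a" using nf_exists by blast
    hence "\<exists>a. \<exists>U Ui V Vi. nf (D s) (b (s - 1)) (b s) U Ui V Vi a" by blast
    thus ?thesis unfolding aa_def by (rule someI_ex)
  qed
  define h where "h s = b s - aa s - aa (Suc s)" for s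
  have main: "tor_len smul (frob_act p r) ((*) :: 'a \<Rightarrow> 'a \<Rightarrow> 'a) s = enat (h s * LR) \<and>
              tor_len smul sck sck s = enat (h s) \<and> h s > 0" if s: "1 \<le> s" for s
  proof -
    obtain U Ui V Vi where nf1: "nf (D s) (b (s - 1)) (b s) U Ui V Vi (aa s)" using nfa by blast
    obtain U2 Ui2 V2 Vi2 where nf2: "nf (D (Suc s)) (b s) (b (Suc s)) U2 Ui2 V2 Vi2 (aa (Suc s))"
      using nfa[of "Suc s"] by auto
    have k1': "len 0 (+) sck {0} UNIV = enat 1" using k1 by (simp add: one_enat_def)
    have tk: "tor_len smul sck sck s = enat (h s * 1) \<and> aa (Suc s) * 1 \<le> (b s - aa s) * 1"
      unfolding tor_eq[OF gbd s] h_def by (rule tor_formula[OF fr s gk nf1 nf2 k1'])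
    have tf: "tor_len smul (frob_act p r) (*) s = enat (h s * LR)"
      unfolding tor_eq[OF gbd s] h_def using tor_formula[OF fr s gf nf1 nf2 Rf] by simp
    have "h s > 0"
    proof (rule ccontr)
      assume "\<not> h s > 0"
      hence "aa (Suc s) = b s - aa s" using tk unfolding h_def by linarith
      moreover have "len 0 (+) (vsc sck) {0} (mv sck (D (Suc s)) (b s) (b (Suc s)) ` vecs (b (Suc s))) = enat (aa (Suc s))"
        using nf_len[OF nf2 gk] k1 by (simp add: of_nat_eq_enat)
      ultimately have "finite_pd smul" using pd_finite[OF fr s gk k1 Rf nf1] by simp
      thus False using npd by simp
    qed
    thus ?thesis using tk tf by simp
  qed
  have ev: "\<forall>\<^sub>F s in sequentially.
      real (the_enat (tor_len smul (frob_act p r) ((*) :: 'a \<Rightarrow> 'a \<Rightarrow> 'a) s)) / real (the_enat (tor_len smul sck sck s))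
      = real (the_enat (mod_length ((*) :: 'a \<Rightarrow> 'a \<Rightarrow> 'a)))"
  proof (rule eventually_sequentiallyI[of 1])
    fix s :: nat assume "1 \<le> s"
    from main[OF this] show "real (the_enat (tor_len smul (frob_act p r) ((*) :: 'a \<Rightarrow> 'a \<Rightarrow> 'a) s)) / real (the_enat (tor_len smul sck sck s))
      = real (the_enat (mod_length ((*) :: 'a \<Rightarrow> 'a \<Rightarrow> 'a)))"
      using MLen by simp
  qed
  show ?thesis using tendsto_eventually[OF ev] MLen by simp
qed


end
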